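(* Let $\ell\ge2$ and $\lambda\in\mathcal{C}_\ell$. Define a word $w(\lambda)$ in the letters $s_0,\ldots,s_{\ell-1}$ recursively by $w(\emptyset)=$ the empty word and, for $\lambda\ne\emptyset$, $w(\lambda)=s_i\,w(s_i(\lambda))$, where $i$ is the residue of the rightmost box in the last nonzero row of $\lambda$. Then $w(\lambda)$ is a reduced expression for the minimal length element of $\widetilde{S_\ell}$ indexed by $\lambda$, and its length is \[ l(w(\lambda))=\sum_{i=0}^{\ell-1}\lambda_{R(i)}, \] where $R(i)$ is the longest row of $\lambda$ whose rightmost box has residue $i$ (the term is $0$ if no row of $\lambda$ ends in a box of residue $i$).
   Context: Partitions are in English notation; box $(x,y)$ is in row $x$, column $y$, with residue the least nonnegative integer congruent to $y-x$ mod $\ell$. Hook length of a box: boxes weakly to its right in its row plus boxes strictly below it in its column. $\mathcal{C}_\ell$ is the set of $\ell$-cores (partitions with no hook length divisible by $\ell$). Let $V=\{v\in\mathbf{R}^\ell:\sum v_j=0\}$ and $\Lambda=V\cap\mathbf{Z}^\ell$. For $1\le i\le\ell-1$, $s_i$ acts on $V$ by swapping coordinates $i$ and $i+1$, and $s_0(v_1,\ldots,v_\ell)=(v_\ell+1,v_2,\ldots,v_{\ell-1},v_1-1)$. These generate the affine symmetric group $\widetilde{S_\ell}$, a Coxeter group with Coxeter generators $s_0,\ldots,s_{\ell-1}$ and Coxeter length $l$; it preserves $\Lambda$. For $\mathbf{a}\in\Lambda$ let $X(\mathbf{a})=\{r\ell+(j-1):1\le j\le\ell,\ r\le a_j\}$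 and let $\pi_\ell(\mathbf{a})$ be the partition whose nonzero parts are the positive values of $\#\{y\notin X(\mathbf{a}):y<x\}$ for $x\in X(\mathbf{a})$; $\pi_\ell:\Lambda\to\mathcal{C}_\ell$ is a bijection. For $\lambda\in\mathcal{C}_\ell$, $s_i(\lambda):=\pi_\ell(s_i(\pi_\ell^{-1}(\lambda)))$. The set $\{u\in\widetilde{S_\ell}:u(0)=\pi_\ell^{-1}(\lambda)\}$ is a left coset of $\langle s_1,\ldots,s_{\ell-1}\rangle$, and its unique element of minimal length is the minimal length element indexed by $\lambda$. *)

theory Defs
  imports Complex_Main "HOL-Library.Multiset"
begin

(* Partitions: weakly decreasing lists of positive naturals; row x (1-indexed) has length lam!(x-1). *)
definition is_partition :: "nat list \<Rightarrow> bool" where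
  "is_partition lam \<longleftrightarrow> sorted_wrt (\<ge>) lam \<and> (\<forall>p\<in>set lam. 0 < p)"

definition residue :: "nat \<Rightarrow> nat \<Rightarrow> nat \<Rightarrow> nat" where
  "residue l x y = nat ((int y - int x) mod int l)"

definition hook :: "nat list \<Rightarrow> nat \<Rightarrow> nat \<Rightarrow> nat" where
  "hook lam x y = (lam ! (x - 1) - y + 1)
     + card {x'. x < x' \<and> x' \<le> length lam \<and> y \<le> lam ! (x' - 1)}"

definition is_core :: "nat \<Rightarrow> nat list \<Rightarrow> bool" where
  "is_core l lam \<longleftrightarrow> is_partition lam \<and>
     (\<forall>x y. 1 \<le> x \<and> x \<le> length lam \<and> 1 \<le> y \<and> y \<le> lam ! (x - 1)
        \<longrightarrow> \<not> l dvd hook lam x y)"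

(* Vectors (v_1,...,v_l) are lists of length l (0-indexed). Generators s_0,...,s_{l-1}. *)
definition sgen :: "nat \<Rightarrow> nat \<Rightarrow> 'a::ring_1 list \<Rightarrow> 'a list" where
  "sgen l i v = (if i = 0 then v[0 := v ! (l - 1) + 1, l - 1 := v ! 0 - 1]
                 else v[i - 1 := v ! i, i := v ! (i - 1)])"

(* word [i1,...,ik] represents s_{i1} ... s_{ik} *)
definition act :: "nat \<Rightarrow> nat list \<Rightarrow> 'a::ring_1 list \<Rightarrow> 'a list" where
  "act l w v = foldr (sgen l) w v"

definition is_word :: "nat \<Rightarrow> nat list \<Rightarrow> bool" where
  "is_word l w \<longleftrightarrow> set w \<subseteq> {..<l}"

definition inV :: "nat \<Rightarrow> real list \<Rightarrow> bool" where
  "inV l v \<longleftrightarrow> length v = l \<and> sum_list v = 0"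

definition inLambda :: "nat \<Rightarrow> int list \<Rightarrow> bool" where
  "inLambda l a \<longleftrightarrow> length a = l \<and> sum_list a = 0"

definition same_elem :: "nat \<Rightarrow> nat list \<Rightarrow> nat list \<Rightarrow> bool" where
  "same_elem l w w' \<longleftrightarrow> (\<forall>v. inV l v \<longrightarrow> act l w v = act l w' v)"

definition coxlen :: "nat \<Rightarrow> nat list \<Rightarrow> nat" where
  "coxlen l w = (LEAST n. \<exists>w'. is_word l w' \<and> length w' = n \<and> same_elem l w w')"

definition reduced :: "nat \<Rightarrow> nat list \<Rightarrow> bool" where
  "reduced l w \<longleftrightarrow> is_word l w \<and> length w = coxlen l w"

definition Xset :: "nat \<Rightarrow> int list \<Rightarrow> int set" where
  "Xset l a = {r * int l + int j | r j. j < l \<and> r \<le> a ! j}"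

definition gapcount :: "nat \<Rightarrow> int list \<Rightarrow> int \<Rightarrow> nat" where
  "gapcount l a x = card {y. y \<notin> Xset l a \<and> y < x}"

definition pi_l :: "nat \<Rightarrow> int list \<Rightarrow> nat list" where
  "pi_l l a = (THE lam. is_partition lam \<and>
      (\<forall>n>0. count (mset lam) n = card {x \<in> Xset l a. gapcount l a x = n}))"

definition pi_inv :: "nat \<Rightarrow> nat list \<Rightarrow> int list" where
  "pi_inv l lam = (THE a. inLambda l a \<and> pi_l l a = lam)"

definition score :: "nat \<Rightarrow> nat \<Rightarrow> nat list \<Rightarrow> nat list" where
  "score l i lam = pi_l l (sgen l i (pi_inv l lam))"

definition last_res :: "nat \<Rightarrow> nat list \<Rightarrow> nat" where
  "last_res l lam = residue l (length lam) (last lam)"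

(* the recursively defined word w(lam), as its graph *)
inductive wrel :: "nat \<Rightarrow> nat list \<Rightarrow> nat list \<Rightarrow> bool" for l where
  empty: "wrel l [] []"
| step: "lam \<noteq> [] \<Longrightarrow> i = last_res l lam \<Longrightarrow> wrel l (score l i lam) w
           \<Longrightarrow> wrel l lam (i # w)"

definition in_coset :: "nat \<Rightarrow> nat list \<Rightarrow> nat list \<Rightarrow> bool" where
  "in_coset l lam w \<longleftrightarrow> is_word l w \<and>
     act l w (replicate l (0::real)) = map real_of_int (pi_inv l lam)"

definition is_min_elem :: "nat \<Rightarrow> nat list \<Rightarrow> nat list \<Rightarrow> bool" where
  "is_min_elem l lam w \<longleftrightarrow> in_coset l lam w \<and>
     (\<forall>w'. in_coset l lam w' \<and> \<not> same_elem l w w' \<longrightarrow> coxlen l w < coxlen l w')"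

definition Rlen :: "nat \<Rightarrow> nat list \<Rightarrow> nat \<Rightarrow> nat" where
  "Rlen l lam i = Max (insert 0 {lam ! (x - 1) | x. 1 \<le> x \<and> x \<le> length lam
                        \<and> residue l x (lam ! (x - 1)) = i})"

end

theory Submission
  imports Defs
begin

definition tau :: "nat \<Rightarrow> nat \<Rightarrow> nat \<Rightarrow> nat" where
 "tau l i k = (if i = 0 then (if k = 0 then l-1 else if k = l-1 then 0 else k)
               else (if k = i-1 then i else if k = i then i-1 else k))"

definition dsh :: "nat \<Rightarrow> nat \<Rightarrow> nat \<Rightarrow> 'a::ring_1" where
 "dsh l i k = (if i = 0 then (if k = 0 then 1 else if k = l-1 then -1 else 0) else 0)"

lemma sgen_length[simp]: "length (sgen l i v) = length v"
  by (simp add: sgen_def)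

lemma sgen_nth:
  assumes "2 \<le> l" "i < l" "length v = l" "k < l"
  shows "sgen l i v ! k = v ! (tau l i k) + dsh l i k"
  using assms by (auto simp: sgen_def tau_def dsh_def nth_list_update)

lemma tau_lt: "2 \<le> l \<Longrightarrow> i < l \<Longrightarrow> k < l \<Longrightarrow> tau l i k < l"
  by (auto simp: tau_def)

lemma tau_tau: "2 \<le> l \<Longrightarrow> i < l \<Longrightarrow> k < l \<Longrightarrow> tau l i (tau l i k) = k"
  by (auto simp: tau_def)

lemma bij_tau: "2 \<le> l \<Longrightarrow> i < l \<Longrightarrow> bij_betw (tau l i) {..<l} {..<l}"
  by (rule bij_betw_byWitness[where f'="tau l i"]) (auto simp: tau_tau tau_lt)

lemma act_Cons[simp]: "act l (i # w) v = sgen l i (act l w v)"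
  by (simp add: act_def)

lemma act_Nil[simp]: "act l [] v = v"
  by (simp add: act_def)

lemma act_length[simp]: "length (act l w v) = length v"
  by (induction w) auto

lemma act_rep:
  assumes "is_word l w" "2 \<le> l"
  shows "\<exists>\<sigma>. bij_betw \<sigma> {..<l} {..<l} \<and>
     (\<forall>v::real list. length v = l \<longrightarrow>
        (\<forall>k<l. act l w v ! k = v ! (\<sigma> k) + act l w (replicate l 0) ! k))"
  using assms(1)
proof (induction w)
  case Nil
  then show ?case by (intro exI[of _ "\<lambda>k. k"]) (auto simp: bij_betw_def)
next
  case (Cons i w)
  then have il: "i < l" and ww: "is_word l w" by (auto simp: is_word_def)
  from Cons.IH[OF ww] obtain \<sigma> where bs: "bij_betw \<sigma> {..<l} {..<l}"
    and rep: "\<forall>v::real list. length v = l \<longrightarrow>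
        (\<forall>k<l. act l w v ! k = v ! (\<sigma> k) + act l w (replicate l 0) ! k)" by blast
  show ?case
  proof (intro exI[of _ "\<sigma> \<circ> tau l i"] conjI allI impI)
    show "bij_betw (\<sigma> \<circ> tau l i) {..<l} {..<l}"
      using bij_betw_trans[OF bij_tau[OF assms(2) il] bs] .
    fix v :: "real list" and k assume v: "length v = l" and k: "k < l"
    have t: "tau l i k < l" using tau_lt[OF assms(2) il k] .
    have "length (act l w v) = l" using v by simp
    then have e1: "act l (i # w) v ! k = act l w v ! (tau l i k) + dsh l i k"
      using sgen_nth[OF assms(2) il \<open>length (act l w v) = l\<close> k] by simp
    have e2: "act l w v ! (tau l i k) = v ! (\<sigma> (tau l i k)) + act l w (replicate l 0) ! (tau l i k)"
      using rep v t by blast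
    have e3: "act l (i # w) (replicate l (0::real)) ! k = act l w (replicate l 0) ! (tau l i k) + dsh l i k"
      using sgen_nth[OF assms(2) il _ k, of "act l w (replicate l 0)"] by simp
    show "act l (i # w) v ! k = v ! ((\<sigma> \<circ> tau l i) k) + act l (i # w) (replicate l 0) ! k"
      unfolding e1 e2 e3 by simp
  qed
qed

definition PP :: "nat \<Rightarrow> (nat \<times> nat) set" where
  "PP l = {(p,q). p < q \<and> q < l}"

lemma finite_PP[simp]: "finite (PP l)"
  by (rule finite_subset[of _ "{..<l} \<times> {..<l}"]) (auto simp: PP_def)

definition FF :: "real \<Rightarrow> int" where
  "FF t = max (\<lceil>t\<rceil> - 1) (- \<lfloor>t\<rfloor>)"

definition LL :: "nat \<Rightarrow> real list \<Rightarrow> int" where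
  "LL l v = (\<Sum>(p,q)\<in>PP l. FF (v!p - v!q))"

lemma FF_sym: "FF (1 - t) = FF t"
proof -
  have "\<lceil>1 - t\<rceil> = 1 - \<lfloor>t\<rfloor>"
    by (metis add_uminus_conv_diff ceiling_add_one ceiling_minus uminus_add_conv_diff
        add.commute diff_add_cancel)
  moreover have "\<lfloor>1 - t\<rfloor> = 1 - \<lceil>t\<rceil>"
    by (metis add.commute ceiling_minus diff_conv_add_uminus floor_add_int floor_minus of_int_1 uminus_add_conv_diff add_uminus_conv_diff)
  ultimately show ?thesis by (simp add: FF_def max.commute)
qed

lemma aux_max1: "\<bar>max (- k - 1) k - max (k - 1) (- k)\<bar> \<le> (1::int)"
  unfolding max_def abs_if by presburger
lemma aux_max2: "\<bar>max (- k - 1) (k + 1) - max k (- k)\<bar> \<le> (1::int)"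
  unfolding max_def abs_if by presburger

lemma FF_neg: "\<bar>FF (-t) - FF t\<bar> \<le> 1"
proof -
  have c: "\<lceil>t\<rceil> = (if t = of_int \<lfloor>t\<rfloor> then \<lfloor>t\<rfloor> else \<lfloor>t\<rfloor> + 1)" by (rule ceiling_altdef)
  have e: "FF (-t) - FF t = max (- \<lfloor>t\<rfloor> - 1) \<lceil>t\<rceil> - max (\<lceil>t\<rceil> - 1) (- \<lfloor>t\<rfloor>)"
    by (simp add: FF_def ceiling_minus floor_minus)
  show ?thesis
  proof (cases "t = of_int \<lfloor>t\<rfloor>")
    case True
    then have "\<lceil>t\<rceil> = \<lfloor>t\<rfloor>" using c by simp
    then show ?thesis unfolding e using aux_max1 by simp
  next
    case False
    then have "\<lceil>t\<rceil> = \<lfloor>t\<rfloor> + 1" using c by simp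
    then show ?thesis unfolding e using aux_max2 by simp
  qed
qed

lemma FF_nonneg: "0 \<le> FF t"
proof -
  have c: "\<lceil>t\<rceil> = (if t = of_int \<lfloor>t\<rfloor> then \<lfloor>t\<rfloor> else \<lfloor>t\<rfloor> + 1)" by (rule ceiling_altdef)
  show ?thesis using c by (simp add: FF_def) (auto split: if_splits)
qed

lemma FF_int[simp]: "FF (of_int n) = max (n - 1) (- n)"
  by (simp add: FF_def)

lemma LL_swap:
  assumes l: "2 \<le> l" and i: "1 \<le> i" "i < l" and v: "length v = l"
  shows "LL l (sgen l i v) = LL l v - FF (v!(i-1) - v!i) + FF (v!i - v!(i-1))"
proof -
  define g where "g = (\<lambda>u::real list. \<lambda>(p,q). FF (u!p - u!q))"
  define P' where "P' = PP l - {(i-1,i)}"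
  have mem: "(i-1,i) \<in> PP l" using i by (auto simp: PP_def)
  have LLg: "\<And>u. LL l u = g u (i-1,i) + sum (g u) P'"
    unfolding LL_def P'_def g_def by (rule sum.remove[OF finite_PP mem])
  define \<phi> where "\<phi> = (\<lambda>(p,q). (tau l i p, tau l i q))"
  have phiP: "\<phi> x \<in> P'" if "x \<in> P'" for x
    using that i unfolding \<phi>_def P'_def PP_def tau_def by (auto split: prod.splits if_splits)
  have phiphi: "\<phi> (\<phi> x) = x" if "x \<in> P'" for x
    using that i l tau_tau[OF l \<open>i<l\<close>] unfolding \<phi>_def P'_def PP_def by (auto split: prod.splits)
  have bij: "bij_betw \<phi> P' P'"
    by (rule bij_betw_byWitness[where f'=\<phi>]) (use phiP phiphi in auto)
  have sv: "sgen l i v ! k = v ! tau l i k" if "k < l" for k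
    using sgen_nth[OF l \<open>i<l\<close> v that] i by (simp add: dsh_def)
  have "sum (g (sgen l i v)) P' = sum (\<lambda>x. g v (\<phi> x)) P'"
  proof (rule sum.cong[OF refl])
    fix x assume "x \<in> P'"
    then obtain p q where x: "x = (p,q)" "p < q" "q < l" unfolding P'_def PP_def by auto
    show "g (sgen l i v) x = g v (\<phi> x)"
      using x sv[of p] sv[of q] by (simp add: g_def \<phi>_def)
  qed
  also have "\<dots> = sum (g v) P'" by (rule sum.reindex_bij_betw[OF bij])
  finally have rest: "sum (g (sgen l i v)) P' = sum (g v) P'" .
  have t1: "sgen l i v ! (i-1) = v ! i" "sgen l i v ! i = v ! (i-1)"
    using sv[of "i-1"] sv[of i] i by (auto simp: tau_def)
  show ?thesis using LLg[of v] LLg[of "sgen l i v"] rest t1 by (simp add: g_def)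
qed

lemma LL_zero:
  assumes l: "2 \<le> l" and v: "length v = l"
  shows "LL l (sgen l 0 v) = LL l v - FF (v!0 - v!(l-1)) + FF (v!(l-1) - v!0 + 2)"
proof -
  define g where "g = (\<lambda>u::real list. \<lambda>(p,q). FF (u!p - u!q))"
  define P' where "P' = PP l - {(0,l-1)}"
  have mem: "(0,l-1) \<in> PP l" using l by (auto simp: PP_def)
  have LLg: "\<And>u. LL l u = g u (0,l-1) + sum (g u) P'"
    unfolding LL_def P'_def g_def by (rule sum.remove[OF finite_PP mem])
  define \<phi> where "\<phi> = (\<lambda>(p,q). if p = 0 then (q, l-1) else if q = l-1 then (0,p) else (p,q))"
  have phiP: "\<phi> x \<in> P'" if "x \<in> P'" for x
    using that l unfolding \<phi>_def P'_def PP_def by (auto split: prod.splits if_splits)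
  have phiphi: "\<phi> (\<phi> x) = x" if "x \<in> P'" for x
    using that l unfolding \<phi>_def P'_def PP_def by (auto split: prod.splits)
  have bij: "bij_betw \<phi> P' P'"
    by (rule bij_betw_byWitness[where f'=\<phi>]) (use phiP phiphi in auto)
  have sv: "sgen l 0 v ! k = v ! tau l 0 k + dsh l 0 k" if "k < l" for k
    using sgen_nth[OF l _ v that] l by simp
  have "sum (g (sgen l 0 v)) P' = sum (\<lambda>x. g v (\<phi> x)) P'"
  proof (rule sum.cong[OF refl])
    fix x assume "x \<in> P'"
    then obtain p q where x: "x = (p,q)" "p < q" "q < l" "(p,q) \<noteq> (0,l-1)" unfolding P'_def PP_def by blast
    show "g (sgen l 0 v) x = g v (\<phi> x)"
    proof (cases "p = 0")
      case True
      then have "q \<noteq> l - 1" using x by auto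
      then have "sgen l 0 v ! p - sgen l 0 v ! q = 1 - (v!q - v!(l-1))"
        using True x sv[of p] sv[of q] by (simp add: tau_def dsh_def)
      then show ?thesis using x True by (simp add: g_def \<phi>_def FF_sym)
    next
      case False
      show ?thesis
      proof (cases "q = l - 1")
        case True
        then have "sgen l 0 v ! p - sgen l 0 v ! q = 1 - (v!0 - v!p)"
          using False x sv[of p] sv[of q] by (simp add: tau_def dsh_def)
        then show ?thesis using x True False by (simp add: g_def \<phi>_def FF_sym)
      next
        case False2: False
        have "p \<noteq> l - 1" using x False2 by auto
        then show ?thesis using x False False2 sv[of p] sv[of q] by (simp add: g_def \<phi>_def tau_def dsh_def)
      qed
    qed
  qed
  also have "\<dots> = sum (g v) P'" by (rule sum.reindex_bij_betw[OF bij])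
  finally have rest: "sum (g (sgen l 0 v)) P' = sum (g v) P'" .
  have t1: "sgen l 0 v ! 0 - sgen l 0 v ! (l-1) = v!(l-1) - v!0 + 2"
    using sv[of 0] sv[of "l-1"] l by (simp add: tau_def dsh_def)
  show ?thesis using LLg[of v] LLg[of "sgen l 0 v"] rest t1 by (simp add: g_def)
qed

lemma LL_step:
  assumes l: "2 \<le> l" and i: "i < l" and v: "length v = l"
  shows "LL l (sgen l i v) \<le> LL l v + 1"
proof (cases "i = 0")
  case True
  have "FF (v!(l-1) - v!0 + 2) - FF (v!0 - v!(l-1)) \<le> 1"
  proof -
    have e: "1 - (v!(l-1) - v!0 + 2) = - (v!(l-1) - v!0 + 1)" by simp
    have a: "FF (v!(l-1) - v!0 + 2) = FF (- (v!(l-1) - v!0 + 1))"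
      using FF_sym[of "v!(l-1) - v!0 + 2"] e by metis
    have b: "FF (v!0 - v!(l-1)) = FF (v!(l-1) - v!0 + 1)"
      using FF_sym[of "v!(l-1) - v!0 + 1"] by simp
    show ?thesis using a b FF_neg[of "v!(l-1) - v!0 + 1"] by simp
  qed
  then show ?thesis using LL_zero[OF l v] True by simp
next
  case False
  have "FF (v!i - v!(i-1)) - FF (v!(i-1) - v!i) \<le> 1"
    using FF_neg[of "v!(i-1) - v!i"] by simp
  then show ?thesis using LL_swap[OF l _ i v] False by simp
qed

lemma LL_act:
  assumes l: "2 \<le> l" and w: "is_word l w" and v: "length v = l"
  shows "LL l (act l w v) \<le> LL l v + int (length w)"
  using w
proof (induction w)
  case Nil then show ?case by simp
next
  case (Cons i w)
  then have "i < l" "is_word l w" by (auto simp: is_word_def)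
  then have "LL l (act l w v) \<le> LL l v + int (length w)" using Cons.IH by simp
  moreover have "LL l (act l (i#w) v) \<le> LL l (act l w v) + 1"
    using LL_step[OF l \<open>i<l\<close>] v by simp
  ultimately show ?case by simp
qed

definition cvec :: "nat \<Rightarrow> real list" where
  "cvec l = map (\<lambda>k. (real l - 1 - 2 * real k) / (2 * real l)) [0..<l]"

lemma cvec_length[simp]: "length (cvec l) = l"
  by (simp add: cvec_def)

lemma cvec_diff: "p < l \<Longrightarrow> q < l \<Longrightarrow> cvec l ! p - cvec l ! q = (real q - real p) / real l"
  by (simp add: cvec_def field_simps)

lemma sum_double: "(\<Sum>k<n. 2 * real k) = real n * (real n - 1)"
  by (induction n) (auto simp: algebra_simps)

lemma cvec_V: "1 \<le> l \<Longrightarrow> inV l (cvec l)"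
proof -
  assume l: "1 \<le> l"
  have "sum_list (cvec l) = (\<Sum>k<l. (real l - 1 - 2 * real k) / (2 * real l))"
    by (simp add: cvec_def sum_list_sum_nth atLeast0LessThan)
  also have "\<dots> = (\<Sum>k<l. (real l - 1 - 2 * real k)) / (2 * real l)"
    by (simp add: sum_divide_distrib)
  also have "(\<Sum>k<l. (real l - 1 - 2 * real k)) = real l * (real l - 1) - (\<Sum>k<l. 2 * real k)"
    by (simp add: sum_subtractf)
  also have "\<dots> = 0" by (simp add: sum_double)
  finally show ?thesis by (simp add: inV_def)
qed

lemma LL_cvec: "LL l (cvec l) = 0"
proof -
  have "FF (cvec l ! p - cvec l ! q) = 0" if "(p,q) \<in> PP l" for p q
  proof -
    have pq: "p < q" "q < l" using that by (auto simp: PP_def)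
    define t where "t = cvec l ! p - cvec l ! q"
    have t: "t = (real q - real p) / real l" using cvec_diff[of p l q] pq by (simp add: t_def)
    have "0 < t" "t < 1" using pq by (auto simp: t field_simps)
    then have "\<lfloor>t\<rfloor> = 0" "\<lceil>t\<rceil> = 1" by (auto intro: floor_unique ceiling_unique)
    then show ?thesis by (simp add: FF_def t_def)
  qed
  then show ?thesis unfolding LL_def by (intro sum.neutral) auto
qed

lemma FF_pos_frac: "0 < d \<Longrightarrow> d < 1 \<Longrightarrow> FF (of_int n + d) = max n (- n)"
proof -
  assume d: "0 < d" "d < 1"
  then have "\<lfloor>of_int n + d\<rfloor> = n" "\<lceil>of_int n + d\<rceil> = n + 1"
    by (auto intro: floor_unique ceiling_unique)
  then show ?thesis by (simp add: FF_def)
qed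

lemma FF_neg_frac: "-1 < d \<Longrightarrow> d < 0 \<Longrightarrow> FF (of_int n + d) = max (n - 1) (1 - n)"
proof -
  assume d: "-1 < d" "d < 0"
  then have "\<lfloor>of_int n + d\<rfloor> = n - 1" "\<lceil>of_int n + d\<rceil> = n"
    by (auto intro: floor_unique ceiling_unique)
  then show ?thesis by (simp add: FF_def)
qed

lemma OPT:
  fixes a :: "int list" and x :: "real list"
  assumes l: "1 \<le> l" and la: "length a = l" and lx: "length x = l"
    and bs: "bij_betw \<sigma> {..<l} {..<l}"
    and xk: "\<And>k. k < l \<Longrightarrow> x ! k = real_of_int (a!k) + cvec l ! (\<sigma> k)"
  shows "LL l (map real_of_int a) \<le> LL l x"
    and "LL l x = LL l (map real_of_int a) \<Longrightarrow> (\<forall>p q. p < q \<longrightarrow> q < l \<longrightarrow> (\<sigma> p < \<sigma> q \<longleftrightarrow> a!p \<le> a!q))"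
proof -
  have inj: "inj_on \<sigma> {..<l}" using bs by (simp add: bij_betw_def)
  have sl: "\<sigma> k < l" if "k < l" for k using bs that by (auto simp: bij_betw_def)
  define f where "f = (\<lambda>(p,q). FF (map real_of_int a ! p - map real_of_int a ! q))"
  define g where "g = (\<lambda>(p,q). FF (x!p - x!q))"
  have tm: "f (p,q) \<le> g (p,q) \<and> (f (p,q) = g (p,q) \<longrightarrow> (\<sigma> p < \<sigma> q \<longleftrightarrow> a!p \<le> a!q))"
    if "(p,q) \<in> PP l" for p q
  proof -
    have pq: "p < q" "q < l" using that by (auto simp: PP_def)
    define n where "n = a!p - a!q"
    define d where "d = cvec l ! (\<sigma> p) - cvec l ! (\<sigma> q)"
    have ne: "\<sigma> p \<noteq> \<sigma> q" using inj pq by (auto simp: inj_on_def)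
    have dd: "d = (real (\<sigma> q) - real (\<sigma> p)) / real l" using cvec_diff sl pq by (simp add: d_def)
    have xd: "x!p - x!q = of_int n + d" using xk pq by (simp add: n_def d_def)
    have fn: "f (p,q) = max (n - 1) (- n)" using pq la FF_int[of n] by (simp add: f_def n_def)
    show ?thesis
    proof (cases "\<sigma> p < \<sigma> q")
      case True
      then have "0 < d" "d < 1" using sl[of p] sl[of q] pq by (auto simp: dd field_simps)
      then have "g (p,q) = max n (- n)" using FF_pos_frac xd by (simp add: g_def)
      then show ?thesis using fn True by (auto simp: n_def)
    next
      case False
      then have "\<sigma> q < \<sigma> p" using ne by simp
      then have "-1 < d" "d < 0" using sl[of p] sl[of q] pq by (auto simp: dd field_simps)
      then have "g (p,q) = max (n - 1) (1 - n)" using FF_neg_frac xd by (simp add: g_def)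
      then show ?thesis using fn False by (auto simp: n_def)
    qed
  qed
  have LLa: "LL l (map real_of_int a) = sum f (PP l)" by (simp add: LL_def f_def)
  have LLx: "LL l x = sum g (PP l)" by (simp add: LL_def g_def)
  show "LL l (map real_of_int a) \<le> LL l x"
    unfolding LLa LLx by (rule sum_mono) (use tm in auto)
  assume eq: "LL l x = LL l (map real_of_int a)"
  show "\<forall>p q. p < q \<longrightarrow> q < l \<longrightarrow> (\<sigma> p < \<sigma> q \<longleftrightarrow> a!p \<le> a!q)"
  proof (intro allI impI)
    fix p q assume pq: "p < q" "q < l"
    then have mem: "(p,q) \<in> PP l" by (simp add: PP_def)
    have "f (p,q) = g (p,q)"
    proof (rule ccontr)
      assume "f (p,q) \<noteq> g (p,q)"
      then have "f (p,q) < g (p,q)" using tm[OF mem] by simp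
      then have "sum f (PP l) < sum g (PP l)"
        using tm mem by (intro sum_strict_mono_ex1) auto
      then show False using eq LLa LLx by simp
    qed
    then show "\<sigma> p < \<sigma> q \<longleftrightarrow> a!p \<le> a!q" using tm[OF mem] by blast
  qed
qed

lemma rank_card:
  fixes \<sigma> :: "nat \<Rightarrow> nat"
  assumes bs: "bij_betw \<sigma> {..<l} {..<l}" and k: "k < l"
  shows "card {j. j < l \<and> \<sigma> j < \<sigma> k} = \<sigma> k"
proof -
  have inj: "inj_on \<sigma> {j. j < l \<and> \<sigma> j < \<sigma> k}"
    using bs by (rule inj_on_subset[OF bij_betw_imp_inj_on]) auto
  have sk: "\<sigma> k < l" using bs k by (auto simp: bij_betw_def)
  have "\<sigma> ` {j. j < l \<and> \<sigma> j < \<sigma> k} = {..<\<sigma> k}"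
  proof
    show "\<sigma> ` {j. j < l \<and> \<sigma> j < \<sigma> k} \<subseteq> {..<\<sigma> k}" by auto
    show "{..<\<sigma> k} \<subseteq> \<sigma> ` {j. j < l \<and> \<sigma> j < \<sigma> k}"
    proof
      fix m assume "m \<in> {..<\<sigma> k}"
      then have "m \<in> {..<l}" using sk by auto
      then have "m \<in> \<sigma> ` {..<l}" using bs by (simp add: bij_betw_def)
      then obtain j where "j < l" "\<sigma> j = m" by auto
      then show "m \<in> \<sigma> ` {j. j < l \<and> \<sigma> j < \<sigma> k}" using \<open>m \<in> {..<\<sigma> k}\<close> by auto
    qed
  qed
  then show ?thesis using card_image[OF inj] by simp
qed

lemma RANK:
  fixes \<sigma> \<sigma>' :: "nat \<Rightarrow> nat"
  assumes b1: "bij_betw \<sigma> {..<l} {..<l}" and b2: "bij_betw \<sigma>' {..<l} {..<l}"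
    and pat: "\<forall>p q. p < q \<longrightarrow> q < l \<longrightarrow> (\<sigma> p < \<sigma> q \<longleftrightarrow> \<sigma>' p < \<sigma>' q)"
    and kl: "k < l"
  shows "\<sigma> k = \<sigma>' k"
proof -
  have i1: "inj_on \<sigma> {..<l}" and i2: "inj_on \<sigma>' {..<l}" using b1 b2 by (auto simp: bij_betw_def)
  have "{j. j < l \<and> \<sigma> j < \<sigma> k} = {j. j < l \<and> \<sigma>' j < \<sigma>' k}"
  proof (intro Collect_cong conj_cong refl)
    fix j assume j: "j < l"
    show "\<sigma> j < \<sigma> k \<longleftrightarrow> \<sigma>' j < \<sigma>' k"
    proof (cases j k rule: linorder_cases)
      case less then show ?thesis using pat kl by blast
    next
      case equal then show ?thesis by simp
    next
      case greater
      have "\<sigma> j \<noteq> \<sigma> k" using inj_onD[OF i1, of j k] j kl greater by auto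
      moreover have "\<sigma>' j \<noteq> \<sigma>' k" using inj_onD[OF i2, of j k] j kl greater by auto
      moreover have "\<sigma> k < \<sigma> j \<longleftrightarrow> \<sigma>' k < \<sigma>' j" using pat j greater by blast
      ultimately show ?thesis by auto
    qed
  qed
  then show ?thesis using rank_card[OF b1 kl] rank_card[OF b2 kl] by simp
qed

lemma divmod_lin:
  fixes R j :: int and l :: nat
  assumes "0 < l" "0 \<le> j" "j < int l"
  shows "(R * int l + j) div int l = R" "(R * int l + j) mod int l = j"
proof -
  have "(j + R * int l) div int l = j div int l + R" using assms by simp
  moreover have "j div int l = 0" using assms by (simp add: div_pos_pos_trivial)
  ultimately show "(R * int l + j) div int l = R" by (simp add: add.commute)
  have "(j + R * int l) mod int l = j mod int l" by simp
  moreover have "j mod int l = j" using assms by (simp add: mod_pos_pos_trivial)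
  ultimately show "(R * int l + j) mod int l = j" by (simp add: add.commute)
qed

lemma Xset_lin:
  assumes l: "0 < l" and j: "j < l"
  shows "R * int l + int j \<in> Xset l a \<longleftrightarrow> R \<le> a ! j"
proof
  assume "R * int l + int j \<in> Xset l a"
  then obtain r j' where e: "R * int l + int j = r * int l + int j'" "j' < l" "r \<le> a ! j'"
    unfolding Xset_def by blast
  have "r = R" using divmod_lin(1)[OF l, of "int j" R] divmod_lin(1)[OF l, of "int j'" r] e j by simp
  moreover have "j' = j" using divmod_lin(2)[OF l, of "int j" R] divmod_lin(2)[OF l, of "int j'" r] e j by simp
  ultimately show "R \<le> a ! j" using e by simp
next
  assume "R \<le> a ! j"
  then show "R * int l + int j \<in> Xset l a" unfolding Xset_def using j by blast
qed

lemma Xset_iff: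
  assumes l: "0 < l"
  shows "y \<in> Xset l a \<longleftrightarrow> y div int l \<le> a ! nat (y mod int l)"
proof -
  have y: "y = (y div int l) * int l + int (nat (y mod int l))" using l by simp
  have "nat (y mod int l) < l" using l by (simp add: nat_less_iff)
  then show ?thesis using Xset_lin[OF l, of "nat (y mod int l)" "y div int l" a] y by metis
qed

definition xp :: "int \<Rightarrow> nat list \<Rightarrow> nat \<Rightarrow> int" where
  "xp c lam k = int (lam ! k) - int k - 1 + c"

definition Bset :: "int \<Rightarrow> nat list \<Rightarrow> int set" where
  "Bset c lam = xp c lam ` {..<length lam} \<union> {y. y \<le> c - int (length lam) - 1}"

definition gcS :: "int set \<Rightarrow> int \<Rightarrow> nat" where
  "gcS S x = card {y. y \<notin> S \<and> y < x}"

lemma gapcount_gcS: "gapcount l a x = gcS (Xset l a) x"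
  by (simp add: gapcount_def gcS_def)

lemma part_mono: "is_partition lam \<Longrightarrow> k \<le> k' \<Longrightarrow> k' < length lam \<Longrightarrow> lam ! k' \<le> lam ! k"
  unfolding is_partition_def
  by (metis le_eq_less_or_eq sorted_wrt_nth_less)

lemma part_pos: "is_partition lam \<Longrightarrow> k < length lam \<Longrightarrow> 0 < lam ! k"
  unfolding is_partition_def by auto

lemma xp_mono: "is_partition lam \<Longrightarrow> k \<le> k' \<Longrightarrow> k' < length lam \<Longrightarrow> xp c lam k' + int k' \<le> xp c lam k + int k"
  using part_mono[of lam k k'] by (simp add: xp_def)

lemma xp_lower: "is_partition lam \<Longrightarrow> k < length lam \<Longrightarrow> c - int k \<le> xp c lam k"
  using part_pos[of lam k] by (simp add: xp_def)

lemma xp_strict: "is_partition lam \<Longrightarrow> k < k' \<Longrightarrow> k' < length lam \<Longrightarrow> xp c lam k' < xp c lam k"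
  using xp_mono[of lam k k' c] by simp

lemma xp_inj: "is_partition lam \<Longrightarrow> inj_on (xp c lam) {..<length lam}"
  unfolding inj_on_def by (metis lessThan_iff linorder_neqE_nat less_irrefl xp_strict)

lemma xp_gt_low: "is_partition lam \<Longrightarrow> k < length lam \<Longrightarrow> c - int (length lam) - 1 < xp c lam k"
  using xp_lower[of lam k c] by simp

lemma gc_low:
  assumes "y \<le> c - int (length lam) - 1"
  shows "gcS (Bset c lam) y = 0"
proof -
  have "{z. z \<notin> Bset c lam \<and> z < y} = {}" using assms by (auto simp: Bset_def)
  then show ?thesis unfolding gcS_def by (metis card.empty)
qed

lemma gc_B:
  assumes p: "is_partition lam" and k: "k < length lam"
  shows "gcS (Bset c lam) (xp c lam k) = lam ! k"
proof -
  let ?n = "length lam"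
  let ?A = "{c - int ?n ..< xp c lam k}"
  let ?I = "xp c lam ` {k<..<?n}"
  have eq: "{y. y \<notin> Bset c lam \<and> y < xp c lam k} = ?A - ?I"
  proof (intro set_eqI iffI)
    fix y assume y: "y \<in> {y. y \<notin> Bset c lam \<and> y < xp c lam k}"
    then show "y \<in> ?A - ?I" by (auto simp: Bset_def)
  next
    fix y assume y: "y \<in> ?A - ?I"
    have "y \<notin> Bset c lam"
    proof
      assume "y \<in> Bset c lam"
      then consider "y \<le> c - int ?n - 1" | k'' where "k'' < ?n" "y = xp c lam k''"
        unfolding Bset_def by auto
      then show False
      proof cases
        case 1 then show ?thesis using y by auto
      next
        case 2
        show ?thesis
        proof (cases "k'' \<le> k")
          case True
          then have "xp c lam k \<le> xp c lam k''" using xp_mono[OF p True k, of c] by simp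
          then show ?thesis using y 2 by auto
        next
          case False
          then show ?thesis using y 2 by auto
        qed
      qed
    qed
    then show "y \<in> {y. y \<notin> Bset c lam \<and> y < xp c lam k}" using y by auto
  qed
  have sub: "?I \<subseteq> ?A"
  proof
    fix y assume "y \<in> ?I"
    then obtain k' where k': "k < k'" "k' < ?n" "y = xp c lam k'" by auto
    have "xp c lam k' < xp c lam k" using xp_strict[OF p k'(1,2)] .
    moreover have "c - int k' \<le> xp c lam k'" using xp_lower[OF p k'(2)] .
    ultimately show "y \<in> ?A" using k' by auto
  qed
  have cI: "card ?I = ?n - k - 1"
  proof -
    have "inj_on (xp c lam) {k<..<?n}" using xp_inj[OF p] by (rule inj_on_subset) auto
    then show ?thesis by (simp add: card_image)
  qed
  have cA: "card ?A = nat (int (lam ! k) - int k - 1 + int ?n)" by (simp add: xp_def)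
  have "gcS (Bset c lam) (xp c lam k) = card ?A - card ?I"
    unfolding gcS_def eq by (rule card_Diff_subset[OF _ sub]) auto
  also have "\<dots> = lam ! k" using cA cI k by simp
  finally show ?thesis .
qed

lemma finite_gaps_B: "finite {y. y \<notin> Bset c lam \<and> y < x}"
  by (rule finite_subset[of _ "{c - int (length lam) ..< x}"]) (auto simp: Bset_def)

lemma gc_mono_B: "x \<le> x' \<Longrightarrow> gcS (Bset c lam) x \<le> gcS (Bset c lam) x'"
  unfolding gcS_def by (rule card_mono[OF finite_gaps_B]) auto

lemma count_eq_card: "count (mset xs) m = card {i. i < length xs \<and> xs ! i = m}"
proof -
  have "count (mset xs) m = length (filter ((=) m) xs)"
    using arg_cong[OF replicate_count_mset_eq_filter_eq[of xs m], of length] by simp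
  also have "\<dots> = card {i. i < length xs \<and> m = xs ! i}" by (rule length_filter_conv_card)
  also have "{i. i < length xs \<and> m = xs ! i} = {i. i < length xs \<and> xs ! i = m}" by auto
  finally show ?thesis .
qed

lemma part_sorted: "is_partition xs \<Longrightarrow> sorted (rev xs)"
  unfolding is_partition_def sorted_wrt_rev by simp

lemma part_eq:
  assumes px: "is_partition xs" and py: "is_partition ys"
    and c: "\<forall>m>0. count (mset xs) m = count (mset ys) m"
  shows "xs = ys"
proof -
  have "mset xs = mset ys"
  proof (rule multiset_eqI)
    fix m
    show "count (mset xs) m = count (mset ys) m"
    proof (cases "m = 0")
      case True
      have "0 \<notin> set xs" "0 \<notin> set ys" using px py unfolding is_partition_def by auto
      then have "count (mset xs) 0 = 0" "count (mset ys) 0 = 0" by (simp_all only: count_mset_0_iff) simp_all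
      then show ?thesis using True by (simp del: count_mset_0_iff)
    next
      case False then show ?thesis using c by simp
    qed
  qed
  then have m: "mset (rev ys) = mset (rev xs)" by simp
  have "sort (rev xs) = rev ys" using properties_for_sort[OF m part_sorted[OF py]] .
  moreover have "sort (rev xs) = rev xs" using part_sorted[OF px] by (simp add: sorted_sort_id)
  ultimately show ?thesis by simp
qed

lemma GEN:
  assumes l: "0 < l" and p: "is_partition lam" and X: "Xset l a = Bset (int l) lam"
  shows "pi_l l a = lam"
proof -
  let ?B = "Bset (int l) lam"
  have P: "\<forall>m>0. count (mset lam) m = card {x \<in> Xset l a. gapcount l a x = m}"
  proof (intro allI impI)
    fix m :: nat assume m: "0 < m"
    have "bij_betw (xp (int l) lam) {i. i < length lam \<and> lam ! i = m} {x \<in> ?B. gcS ?B x = m}"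
    proof (rule bij_betw_imageI)
      show "inj_on (xp (int l) lam) {i. i < length lam \<and> lam ! i = m}"
        using xp_inj[OF p] by (rule inj_on_subset) auto
      show "xp (int l) lam ` {i. i < length lam \<and> lam ! i = m} = {x \<in> ?B. gcS ?B x = m}"
      proof (intro set_eqI iffI)
        fix x assume "x \<in> xp (int l) lam ` {i. i < length lam \<and> lam ! i = m}"
        then obtain i where "i < length lam" "lam ! i = m" "x = xp (int l) lam i" by auto
        then show "x \<in> {x \<in> ?B. gcS ?B x = m}" using gc_B[OF p] by (auto simp: Bset_def)
      next
        fix x assume x: "x \<in> {x \<in> ?B. gcS ?B x = m}"
        then consider "x \<le> int l - int (length lam) - 1" | i where "i < length lam" "x = xp (int l) lam i"
          unfolding Bset_def by auto
        then show "x \<in> xp (int l) lam ` {i. i < length lam \<and> lam ! i = m}"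
        proof cases
          case 1 then have "gcS ?B x = 0" by (rule gc_low)
          then show ?thesis using x m by simp
        next
          case 2 then show ?thesis using x gc_B[OF p 2(1)] by auto
        qed
      qed
    qed
    then have "card {i. i < length lam \<and> lam ! i = m} = card {x \<in> ?B. gcS ?B x = m}"
      by (rule bij_betw_same_card)
    then show "count (mset lam) m = card {x \<in> Xset l a. gapcount l a x = m}"
      by (simp add: count_eq_card gapcount_gcS X)
  qed
  show ?thesis unfolding pi_l_def
  proof (rule the_equality)
    show "is_partition lam \<and> (\<forall>n>0. count (mset lam) n = card {x \<in> Xset l a. gapcount l a x = n})"
      using p P by simp
    fix lam' assume "is_partition lam' \<and> (\<forall>n>0. count (mset lam') n = card {x \<in> Xset l a. gapcount l a x = n})"
    then show "lam' = lam" using part_eq[of lam' lam] p P by simp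
  qed
qed

lemma CB:
  assumes p: "is_partition lam" and K: "K \<le> c - int (length lam)"
  shows "finite (Bset c lam \<inter> {K..})" "card (Bset c lam \<inter> {K..}) = nat (c - K)"
proof -
  let ?n = "length lam"
  have eq: "Bset c lam \<inter> {K..} = xp c lam ` {..<?n} \<union> {K..c - int ?n - 1}"
  proof (intro set_eqI iffI)
    fix y assume "y \<in> Bset c lam \<inter> {K..}" then show "y \<in> xp c lam ` {..<?n} \<union> {K..c - int ?n - 1}"
      by (auto simp: Bset_def)
  next
    fix y assume y: "y \<in> xp c lam ` {..<?n} \<union> {K..c - int ?n - 1}"
    then show "y \<in> Bset c lam \<inter> {K..}"
    proof
      assume "y \<in> xp c lam ` {..<?n}"
      then obtain k where k: "k < ?n" "y = xp c lam k" by auto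
      then have "K \<le> y" using xp_lower[OF p k(1), of c] K by simp
      then show ?thesis using k by (auto simp: Bset_def)
    qed (auto simp: Bset_def)
  qed
  have disj: "xp c lam ` {..<?n} \<inter> {K..c - int ?n - 1} = {}"
  proof -
    have "xp c lam k \<notin> {K..c - int ?n - 1}" if "k < ?n" for k
      using xp_gt_low[OF p that, of c] by simp
    then show ?thesis by blast
  qed
  show "finite (Bset c lam \<inter> {K..})" unfolding eq by simp
  have "card (Bset c lam \<inter> {K..}) = card (xp c lam ` {..<?n}) + card {K..c - int ?n - 1}"
    unfolding eq by (rule card_Un_disjoint) (use disj in auto)
  also have "card (xp c lam ` {..<?n}) = ?n" using card_image[OF xp_inj[OF p]] by simp
  finally show "card (Bset c lam \<inter> {K..}) = nat (c - K)" using K by simp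
qed

lemma CX:
  assumes l: "0 < l" and la: "length a = l" and m: "\<forall>j<l. m \<le> a ! j"
  shows "finite (Xset l a \<inter> {m * int l..})"
    "int (card (Xset l a \<inter> {m * int l..})) = sum_list a + int l * (1 - m)"
proof -
  define f where "f = (\<lambda>(j::nat, R::int). R * int l + int j)"
  define A where "A = (SIGMA j:{..<l}. {m..a!j})"
  have eq: "Xset l a \<inter> {m * int l..} = f ` A"
  proof (intro set_eqI iffI)
    fix y assume y: "y \<in> Xset l a \<inter> {m * int l..}"
    define R where "R = y div int l"
    define j where "j = nat (y mod int l)"
    have yy: "y = R * int l + int j" using l by (simp add: R_def j_def)
    have jl: "j < l" using l by (simp add: j_def nat_less_iff)
    have "m * int l div int l \<le> y div int l" using y l by (intro zdiv_mono1) auto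
    then have "m \<le> R" using l by (simp add: R_def)
    moreover have "R \<le> a ! j" using y Xset_lin[OF l jl, of R a] yy by simp
    ultimately show "y \<in> f ` A" using jl yy unfolding A_def f_def by force
  next
    fix y assume "y \<in> f ` A"
    then obtain j R where jR: "j < l" "m \<le> R" "R \<le> a ! j" "y = R * int l + int j"
      unfolding A_def f_def by auto
    have "m * int l \<le> R * int l" using jR(2) by (simp add: mult_right_mono)
    then have "m * int l \<le> y" using jR(4) by linarith
    then show "y \<in> Xset l a \<inter> {m * int l..}" using jR Xset_lin[OF l jR(1), of R a] by simp
  qed
  have inj: "inj_on f A"
  proof (rule inj_onI)
    fix x y assume x: "x \<in> A" and y: "y \<in> A" and e: "f x = f y"
    obtain j R where x': "x = (j,R)" "j < l" using x unfolding A_def by auto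
    obtain j' R' where y': "y = (j',R')" "j' < l" using y unfolding A_def by auto
    have e': "R * int l + int j = R' * int l + int j'" using e x' y' by (simp add: f_def)
    have "R = R'" using divmod_lin(1)[OF l, of "int j" R] divmod_lin(1)[OF l, of "int j'" R'] e' x' y' by simp
    moreover have "j = j'" using divmod_lin(2)[OF l, of "int j" R] divmod_lin(2)[OF l, of "int j'" R'] e' x' y' by simp
    ultimately show "x = y" using x' y' by simp
  qed
  show "finite (Xset l a \<inter> {m * int l..})" unfolding eq A_def by simp
  have "card (Xset l a \<inter> {m * int l..}) = card A" unfolding eq by (rule card_image[OF inj])
  also have "\<dots> = (\<Sum>j<l. card {m..a!j})" unfolding A_def by (rule card_SigmaI) auto
  finally have "int (card (Xset l a \<inter> {m * int l..})) = (\<Sum>j<l. int (nat (a!j - m + 1)))" by simp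
  also have "\<dots> = (\<Sum>j<l. a!j - m + 1)" using m by (intro sum.cong) auto
  also have "\<dots> = (\<Sum>j<l. a!j) + (\<Sum>j<l. (1 - m))" unfolding sum.distrib[symmetric] by (intro sum.cong) auto
  also have "(\<Sum>j<l. (1 - m)) = int l * (1 - m)" by simp
  also have "(\<Sum>j<l. a!j) = sum_list a" using la by (simp add: sum_list_sum_nth atLeast0LessThan)
  finally show "int (card (Xset l a \<inter> {m * int l..})) = sum_list a + int l * (1 - m)" .
qed

lemma Bset_Nil: "Bset c [] = {y. y \<le> c - 1}"
  by (simp add: Bset_def)

lemma Bset_Cons: "Bset c (h # lam) = insert (int h - 1 + c) (Bset (c - 1) lam)"
proof -
  have "{..<length (h # lam)} = insert 0 (Suc ` {..<length lam})" by (simp add: lessThan_Suc_eq_insert_0)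
  then have "xp c (h # lam) ` {..<length (h # lam)} = insert (int h - 1 + c) (xp (c - 1) lam ` {..<length lam})"
    by (auto simp: xp_def image_image)
  then show ?thesis by (auto simp: Bset_def)
qed

lemma GL:
  "finite (S \<inter> {K..}) \<Longrightarrow> (\<forall>y<K. y \<in> S) \<Longrightarrow> card (S \<inter> {K..}) = N0 \<Longrightarrow> int N0 = c - K
   \<Longrightarrow> \<exists>lam. is_partition lam \<and> S = Bset c lam"
proof (induction N0 arbitrary: S c)
  case 0
  then have "S \<inter> {K..} = {}" by simp
  then have "S = {y. y \<le> c - 1}" using 0 by (auto simp: not_le)
  then show ?case by (intro exI[of _ "[]"]) (simp add: Bset_Nil is_partition_def)
next
  case (Suc N0)
  let ?T = "S \<inter> {K..}"
  have ne: "?T \<noteq> {}" using Suc.prems by auto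
  define N where "N = Max ?T"
  have NT: "N \<in> ?T" using Max_in[OF Suc.prems(1) ne] by (simp add: N_def)
  have Nmax: "y \<le> N" if "y \<in> ?T" for y using Max_ge[OF Suc.prems(1) that] by (simp add: N_def)
  show ?case
  proof (cases "c \<le> N")
    case False
    have sub: "?T \<subseteq> {K..N}" using Nmax by auto
    have "card ?T \<le> card {K..N}" by (rule card_mono[OF _ sub]) simp
    then have "int (Suc N0) \<le> N - K + 1" using Suc.prems(3) by simp
    then have Nc: "N = c - 1" using False Suc.prems(4) by simp
    have "card ?T = card {K..N}" using Suc.prems(3,4) Nc NT by simp
    then have "?T = {K..N}" using card_subset_eq[OF _ sub] by simp
    then have TT: "\<And>x. K \<le> x \<Longrightarrow> x \<in> S \<longleftrightarrow> x \<le> N" by auto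
    have KN: "K \<le> N" using NT by simp
    have "S = {y. y \<le> c - 1}"
    proof (intro set_eqI iffI)
      fix x assume "x \<in> S" then show "x \<in> {y. y \<le> c - 1}" using TT[of x] KN Nc by (cases "K \<le> x") auto
    next
      fix x assume "x \<in> {y. y \<le> c - 1}" then show "x \<in> S" using TT[of x] Suc.prems(2) Nc by (cases "K \<le> x") auto
    qed
    then show ?thesis by (intro exI[of _ "[]"]) (simp add: Bset_Nil is_partition_def)
  next
    case True
    define S' where "S' = S - {N}"
    have T': "S' \<inter> {K..} = ?T - {N}" by (auto simp: S'_def)
    have f': "finite (S' \<inter> {K..})" using Suc.prems(1) T' by simp
    have low': "\<forall>y<K. y \<in> S'" using Suc.prems(2) NT by (auto simp: S'_def)
    have c': "card (S' \<inter> {K..}) = N0" using T' NT Suc.prems(1,3) by simp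
    have i': "int N0 = (c - 1) - K" using Suc.prems(4) by simp
    obtain lam' where p': "is_partition lam'" and S'eq: "S' = Bset (c - 1) lam'"
      using Suc.IH[OF f' low' c' i'] by blast
    define h where "h = nat (N - c + 1)"
    have hN: "int h - 1 + c = N" using True by (simp add: h_def)
    have Seq: "S = insert N S'" using NT by (auto simp: S'_def)
    have "S = Bset c (h # lam')" unfolding Bset_Cons hN Seq S'eq ..
    moreover have "is_partition (h # lam')"
    proof -
      have hpos: "0 < h" using True by (simp add: h_def)
      have hd: "lam' ! 0 \<le> h" if "lam' \<noteq> []"
      proof -
        have "xp (c - 1) lam' 0 \<in> S'" unfolding S'eq Bset_def using that by auto
        then have x0: "xp (c - 1) lam' 0 \<in> S" "xp (c - 1) lam' 0 \<noteq> N" by (auto simp: S'_def)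
        have "xp (c - 1) lam' 0 < N"
        proof (cases "K \<le> xp (c - 1) lam' 0")
          case True then show ?thesis using x0 Nmax[of "xp (c - 1) lam' 0"] by fastforce
        next
          case False then show ?thesis using NT by auto
        qed
        then show ?thesis using True by (simp add: xp_def h_def)
      qed
      have "\<forall>x\<in>set lam'. x \<le> h"
      proof
        fix x assume "x \<in> set lam'"
        then obtain k where k: "k < length lam'" "x = lam' ! k" by (auto simp: in_set_conv_nth)
        then have "x \<le> lam' ! 0" using part_mono[OF p' _ k(1), of 0] by simp
        then show "x \<le> h" using hd k by fastforce
      qed
      then show ?thesis using p' hpos unfolding is_partition_def by auto
    qed
    ultimately show ?thesis by blast
  qed
qed

lemma XB:
  assumes l: "2 \<le> l" and a: "inLambda l a"
  shows "is_partition (pi_l l a)" "Xset l a = Bset (int l) (pi_l l a)"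
proof -
  have l0: "0 < l" using l by simp
  have la: "length a = l" and sa: "sum_list a = 0" using a by (auto simp: inLambda_def)
  have ne: "set a \<noteq> {}" using la l by auto
  define m where "m = Min (set a)"
  have m: "\<forall>j<l. m \<le> a ! j" using la by (auto simp: m_def)
  define K where "K = m * int l"
  have low: "\<forall>y<K. y \<in> Xset l a"
  proof (intro allI impI)
    fix y assume y: "y < K"
    have "y div int l \<le> ((m - 1) * int l + (int l - 1)) div int l"
      using y l0 by (intro zdiv_mono1) (auto simp: K_def algebra_simps)
    also have "\<dots> = m - 1" using divmod_lin(1)[OF l0, of "int l - 1" "m - 1"] l0 by simp
    finally have "y div int l < m" by simp
    moreover have "nat (y mod int l) < l" using l0 by (simp add: nat_less_iff)
    ultimately show "y \<in> Xset l a" using Xset_iff[OF l0] m by fastforce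
  qed
  have fin: "finite (Xset l a \<inter> {K..})" using CX(1)[OF l0 la m] by (simp add: K_def)
  have cd: "int (card (Xset l a \<inter> {K..})) = int l - K"
    using CX(2)[OF l0 la m] sa by (simp add: K_def algebra_simps)
  obtain lam where p: "is_partition lam" and X: "Xset l a = Bset (int l) lam"
    using GL[OF fin low refl, of "int l"] cd by auto
  have "pi_l l a = lam" by (rule GEN[OF l0 p X])
  then show "is_partition (pi_l l a)" "Xset l a = Bset (int l) (pi_l l a)" using p X by auto
qed

lemma pi_inj:
  assumes l: "2 \<le> l" and a: "inLambda l a" and b: "inLambda l b" and e: "pi_l l a = pi_l l b"
  shows "a = b"
proof -
  have l0: "0 < l" using l by simp
  have X: "Xset l a = Xset l b" using XB(2)[OF l a] XB(2)[OF l b] e by simp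
  have la: "length a = l" "length b = l" using a b by (auto simp: inLambda_def)
  show ?thesis
  proof (rule nth_equalityI)
    show "length a = length b" using la by simp
    fix j assume "j < length a"
    then have j: "j < l" using la by simp
    have "a!j * int l + int j \<in> Xset l b" using X Xset_lin[OF l0 j, of "a!j" a] by simp
    then have 1: "a!j \<le> b!j" using Xset_lin[OF l0 j] by simp
    have "b!j * int l + int j \<in> Xset l a" using X Xset_lin[OF l0 j, of "b!j" b] by simp
    then have 2: "b!j \<le> a!j" using Xset_lin[OF l0 j] by simp
    show "a ! j = b ! j" using 1 2 by simp
  qed
qed

lemma pi_inv_pi:
  assumes l: "2 \<le> l" and a: "inLambda l a"
  shows "pi_inv l (pi_l l a) = a"
  unfolding pi_inv_def
  by (rule the_equality) (use a pi_inj[OF l] in auto)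

lemma flush:
  assumes l: "1 \<le> l" and core: "is_core l lam" and k: "k < length lam"
  shows "xp (int l) lam k - int l \<in> Bset (int l) lam"
proof (rule ccontr)
  let ?c = "int l" and ?n = "length lam"
  let ?x = "xp ?c lam"
  have p: "is_partition lam" using core by (simp add: is_core_def)
  define g where "g = ?x k - ?c"
  assume gB: "xp (int l) lam k - int l \<notin> Bset (int l) lam"
  then have gB': "g \<notin> Bset ?c lam" by (simp add: g_def)
  have gl: "?c - int ?n - 1 < g" using gB' by (auto simp: Bset_def)
  have gne: "?x j \<noteq> g" if "j < ?n" for j using gB' that by (auto simp: Bset_def)
  define P where "P = (\<lambda>j. k < j \<and> (j = ?n \<or> (j < ?n \<and> ?x j < g)))"
  define j0 where "j0 = (LEAST j. P j)"
  have Pn: "P ?n" using k by (simp add: P_def)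
  have Pj0: "P j0" unfolding j0_def by (rule LeastI[of P, OF Pn])
  have j0n: "j0 \<le> ?n" unfolding j0_def by (rule Least_le[of P, OF Pn])
  have kj0: "k < j0" using Pj0 by (simp add: P_def)
  have mid: "g < ?x j" if "k < j" "j < j0" for j
  proof -
    have jn: "j < ?n" using that j0n by simp
    have "\<not> P j" using that(2) unfolding j0_def by (rule not_less_Least)
    then have "\<not> ?x j < g" using that(1) jn by (simp add: P_def)
    then show ?thesis using gne[OF jn] by simp
  qed
  have endj: "?x j0 < g" if "j0 < ?n" using Pj0 that by (simp add: P_def)
  define y where "y = g - ?c + int j0 + 1"
  have key: "int (lam ! j) \<ge> y \<longleftrightarrow> j < j0" if "k < j" "j < ?n" for j
  proof -
    have lj: "int (lam ! j) = ?x j + int j + 1 - ?c" by (simp add: xp_def)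
    show ?thesis
    proof
      assume "j < j0"
      then have a: "?x (j0 - 1) + int (j0 - 1) \<le> ?x j + int j"
        using xp_mono[OF p _ _, of j "j0 - 1"] j0n by simp
      have "g < ?x (j0 - 1)" using mid[of "j0 - 1"] \<open>j < j0\<close> that by simp
      then show "int (lam ! j) \<ge> y" using a lj \<open>j < j0\<close> by (simp add: y_def)
    next
      assume "y \<le> int (lam ! j)"
      show "j < j0"
      proof (rule ccontr)
        assume "\<not> j < j0"
        then have "j0 < ?n" "j0 \<le> j" using that by auto
        then have "?x j + int j \<le> ?x j0 + int j0" using xp_mono[OF p _ that(2)] by simp
        then show False using endj[OF \<open>j0 < ?n\<close>] lj \<open>y \<le> int (lam ! j)\<close> by (simp add: y_def)
      qed
    qed
  qed
  have ylek: "y \<le> int (lam ! k)"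
  proof (cases "j0 = Suc k")
    case True
    then show ?thesis using l by (simp add: y_def g_def xp_def)
  next
    case False
    then have kk: "k < j0 - 1" using kj0 by simp
    then have a: "?x (j0 - 1) + int (j0 - 1) \<le> ?x k + int k"
      using xp_mono[OF p _ _, of k "j0 - 1"] j0n by simp
    have "g < ?x (j0 - 1)" using mid[of "j0 - 1"] kk by simp
    then show ?thesis using a kk by (simp add: y_def xp_def)
  qed
  have yge: "1 \<le> y"
  proof (cases "j0 = ?n")
    case True then show ?thesis using gl by (simp add: y_def)
  next
    case False
    then have "j0 < ?n" using j0n by simp
    then have "?c - int j0 \<le> ?x j0" "?x j0 < g" using xp_lower[OF p] endj by auto
    then show ?thesis by (simp add: y_def)
  qed
  define yn where "yn = nat y"
  have yn: "int yn = y" using yge by (simp add: yn_def)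
  have set_eq: "{x'. Suc k < x' \<and> x' \<le> ?n \<and> yn \<le> lam ! (x' - 1)} = {Suc (Suc k)..j0}"
  proof (intro set_eqI iffI)
    fix x' assume x': "x' \<in> {x'. Suc k < x' \<and> x' \<le> ?n \<and> yn \<le> lam ! (x' - 1)}"
    then have "k < x' - 1" "x' - 1 < ?n" "y \<le> int (lam ! (x' - 1))" using yn by auto
    then have "x' - 1 < j0" using key by blast
    then show "x' \<in> {Suc (Suc k)..j0}" using x' by auto
  next
    fix x' assume x': "x' \<in> {Suc (Suc k)..j0}"
    then have a: "k < x' - 1" "x' - 1 < ?n" "x' - 1 < j0" using j0n by auto
    then have "y \<le> int (lam ! (x' - 1))" using key by blast
    then show "x' \<in> {x'. Suc k < x' \<and> x' \<le> ?n \<and> yn \<le> lam ! (x' - 1)}" using a x' yn by auto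
  qed
  have hk: "hook lam (Suc k) yn = (lam ! k - yn + 1) + (j0 - Suc k)"
    unfolding hook_def set_eq by simp
  have "int (hook lam (Suc k) yn) = int l"
  proof -
    have "yn \<le> lam ! k" using ylek yn by simp
    then have "int (hook lam (Suc k) yn) = int (lam ! k) - y + 1 + int j0 - int k - 1"
      using hk kj0 yn by simp
    also have "\<dots> = ?c" by (simp add: y_def g_def xp_def)
    finally show ?thesis .
  qed
  then have "hook lam (Suc k) yn = l" by simp
  moreover have "\<not> l dvd hook lam (Suc k) yn"
  proof -
    have "1 \<le> yn" "yn \<le> lam ! (Suc k - 1)" using yge ylek yn by auto
    moreover have "1 \<le> Suc k" "Suc k \<le> ?n" using k by auto
    ultimately show ?thesis using core unfolding is_core_def by blast
  qed
  ultimately show False by simp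
qed

lemma flushB:
  assumes l: "1 \<le> l" and core: "is_core l lam" and z: "z \<in> Bset (int l) lam"
  shows "z - int l \<in> Bset (int l) lam"
proof -
  from z consider "z \<le> int l - int (length lam) - 1" | k where "k < length lam" "z = xp (int l) lam k"
    unfolding Bset_def by auto
  then show ?thesis
  proof cases
    case 1 then show ?thesis using l by (auto simp: Bset_def)
  next
    case 2 then show ?thesis using flush[OF l core] by simp
  qed
qed

lemma flush_iter:
  assumes l: "1 \<le> l" and core: "is_core l lam" and z: "z \<in> Bset (int l) lam"
  shows "z - int d * int l \<in> Bset (int l) lam"
proof (induction d)
  case 0 then show ?case using z by simp
next
  case (Suc d)
  have "z - int d * int l - int l \<in> Bset (int l) lam" using flushB[OF l core Suc.IH] .
  then show ?case by (simp add: algebra_simps)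
qed

lemma core_surj:
  assumes l: "2 \<le> l" and core: "is_core l lam"
  shows "\<exists>a. inLambda l a \<and> pi_l l a = lam"
proof -
  have l0: "0 < l" and l1: "1 \<le> l" using l by auto
  have p: "is_partition lam" using core by (simp add: is_core_def)
  let ?c = "int l" and ?n = "length lam"
  let ?S = "Bset ?c lam"
  define U where "U = ?c + int (sum_list lam)"
  have Ub: "y \<le> U" if "y \<in> ?S" for y
  proof -
    from that consider "y \<le> ?c - int ?n - 1" | k where "k < ?n" "y = xp ?c lam k"
      unfolding Bset_def by auto
    then show ?thesis
    proof cases
      case 1 then show ?thesis by (simp add: U_def)
    next
      case 2
      have "lam ! k \<le> sum_list lam" using 2 by (simp add: elem_le_sum_list)
      then show ?thesis using 2 by (simp add: U_def xp_def)
    qed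
  qed
  define R0 where "R0 = - int ?n - 1"
  define Rs where "Rs = (\<lambda>j::nat. {R. R0 \<le> R \<and> R * ?c + int j \<in> ?S})"
  have Rbound: "R \<le> U" if "R * ?c + int j \<in> ?S" for R j
  proof -
    have "R * ?c + int j \<le> U" using Ub that by simp
    moreover have "0 \<le> U" by (simp add: U_def)
    moreover have "R \<le> R * ?c" if "0 \<le> R" using that l1 by (simp add: mult_le_cancel_left1)
    ultimately show ?thesis by (cases "0 \<le> R") auto
  qed
  have finR: "finite (Rs j)" for j
    by (rule finite_subset[of _ "{R0..U}"]) (auto simp: Rs_def Rbound)
  have R0in: "R0 \<in> Rs j" if "j < l" for j
  proof -
    have "R0 * ?c + int j \<le> R0 * ?c + ?c - 1" using that by simp
    also have "\<dots> = - int ?n * ?c - 1" by (simp add: R0_def algebra_simps)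
    also have "\<dots> \<le> ?c - int ?n - 1"
    proof -
      have "int ?n \<le> int ?n * ?c" using l1 by (simp add: mult_le_cancel_left1)
      then show ?thesis by simp
    qed
    finally show ?thesis by (simp add: Rs_def Bset_def)
  qed
  define a where "a = map (\<lambda>j. Max (Rs j)) [0..<l]"
  have la: "length a = l" by (simp add: a_def)
  have aj: "a ! j = Max (Rs j)" if "j < l" for j using that by (simp add: a_def)
  have ain: "a ! j \<in> Rs j" if "j < l" for j using aj[OF that] Max_in[OF finR] R0in[OF that] by auto
  have age: "R0 \<le> a ! j" if "j < l" for j using ain[OF that] by (simp add: Rs_def)
  have X: "Xset l a = ?S"
  proof (intro set_eqI)
    fix y
    define R where "R = y div ?c"
    define j where "j = nat (y mod ?c)"
    have yy: "y = R * ?c + int j" using l0 by (simp add: R_def j_def)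
    have jl: "j < l" using l0 by (simp add: j_def nat_less_iff)
    have "y \<in> Xset l a \<longleftrightarrow> R \<le> a ! j" using Xset_lin[OF l0 jl, of R a] yy by simp
    also have "\<dots> \<longleftrightarrow> y \<in> ?S"
    proof
      assume Ra: "R \<le> a ! j"
      have "a ! j * ?c + int j \<in> ?S" using ain[OF jl] by (simp add: Rs_def)
      then have "a ! j * ?c + int j - int (nat (a ! j - R)) * ?c \<in> ?S" by (rule flush_iter[OF l1 core])
      then show "y \<in> ?S" using Ra yy by (simp add: algebra_simps)
    next
      assume yS: "y \<in> ?S"
      show "R \<le> a ! j"
      proof (cases "R0 \<le> R")
        case True
        then have "R \<in> Rs j" using yS yy by (simp add: Rs_def)
        then show ?thesis using Max_ge[OF finR] aj[OF jl] by simp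
      next
        case False then show ?thesis using age[OF jl] by simp
      qed
    qed
    finally show "y \<in> Xset l a \<longleftrightarrow> y \<in> ?S" .
  qed
  have m: "\<forall>j<l. R0 \<le> a ! j" using age by simp
  have c1: "int (card (Xset l a \<inter> {R0 * ?c..})) = sum_list a + ?c * (1 - R0)"
    using CX(2)[OF l0 la m] .
  have K: "R0 * ?c \<le> ?c - int ?n"
  proof -
    have "int ?n \<le> int ?n * ?c" using l1 by (simp add: mult_le_cancel_left1)
    then show ?thesis by (simp add: R0_def algebra_simps)
  qed
  have c2: "card (?S \<inter> {R0 * ?c..}) = nat (?c - R0 * ?c)" using CB(2)[OF p K] .
  have "?c - R0 * ?c \<ge> 0" using K by simp
  then have "sum_list a = 0" using c1 c2 X by (simp add: algebra_simps)
  then have "inLambda l a" using la by (simp add: inLambda_def)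
  moreover have "pi_l l a = lam" by (rule GEN[OF l0 p X])
  ultimately show ?thesis by blast
qed

lemma sum_list_upd: "k < length xs \<Longrightarrow> sum_list (xs[k := x]) = sum_list xs + x - xs ! k"
  for xs :: "'a::ab_group_add list"
proof (induction xs arbitrary: k)
  case Nil then show ?case by simp
next
  case (Cons y ys) then show ?case by (cases k) (auto simp: algebra_simps)
qed

lemma sgen_Lambda:
  assumes l: "2 \<le> l" and i: "i < l" and a: "inLambda l a"
  shows "inLambda l (sgen l i a)"
proof -
  have la: "length a = l" and s: "sum_list a = 0" using a by (auto simp: inLambda_def)
  show ?thesis
  proof (cases "i = 0")
    case True
    then show ?thesis using la s l by (simp add: inLambda_def sgen_def sum_list_upd nth_list_update)
  next
    case False
    then show ?thesis using la s l i by (simp add: inLambda_def sgen_def sum_list_upd nth_list_update)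
  qed
qed

lemma sgen_map:
  assumes l: "2 \<le> l" and i: "i < l" and la: "length a = l"
  shows "map real_of_int (sgen l i a) = sgen l i (map real_of_int a)"
  using assms by (auto simp: sgen_def map_update)

lemma sgen_sgen:
  assumes l: "2 \<le> l" and i: "i < l" and la: "length v = l"
  shows "sgen l i (sgen l i v) = (v :: 'a::ring_1 list)"
proof (rule nth_equalityI)
  show "length (sgen l i (sgen l i v)) = length v" by simp
  fix k assume "k < length (sgen l i (sgen l i v))"
  then have k: "k < l" using la by simp
  show "sgen l i (sgen l i v) ! k = v ! k"
    using assms k by (auto simp: sgen_def nth_list_update)
qed

lemma dec:
  assumes l: "2 \<le> l" and a: "inLambda l a" and ne: "pi_l l a \<noteq> []"
  shows "last_res l (pi_l l a) < l"
    "LL l (map real_of_int (sgen l (last_res l (pi_l l a)) a)) = LL l (map real_of_int a) - 1"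
proof -
  have l0: "0 < l" using l by simp
  let ?lam = "pi_l l a"
  let ?n = "length ?lam"
  have p: "is_partition ?lam" and X: "Xset l a = Bset (int l) ?lam" using XB[OF l a] by auto
  have la: "length a = l" using a by (simp add: inLambda_def)
  have n0: "0 < ?n" using ne by simp
  define xn where "xn = xp (int l) ?lam (?n - 1)"
  have xnX: "xn \<in> Xset l a" using n0 by (simp add: X Bset_def xn_def)
  have xn1: "xn - 1 \<notin> Xset l a"
  proof
    assume "xn - 1 \<in> Xset l a"
    then have "xn - 1 \<in> Bset (int l) ?lam" using X by simp
    then consider "xn - 1 \<le> int l - int ?n - 1" | k where "k < ?n" "xn - 1 = xp (int l) ?lam k"
      unfolding Bset_def by auto
    then show False
    proof cases
      case 1 then show ?thesis using xp_lower[OF p, of "?n - 1" "int l"] n0 by (simp add: xn_def of_nat_diff)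
    next
      case 2
      have kk: "k \<le> ?n - 1" "?n - 1 < ?n" using 2 n0 by auto
      have "xp (int l) ?lam (?n - 1) + int (?n - 1) \<le> xp (int l) ?lam k + int k"
        by (rule xp_mono[OF p kk])
      moreover have "int k \<le> int (?n - 1)" using kk by simp
      ultimately have "xp (int l) ?lam (?n - 1) \<le> xp (int l) ?lam k" by linarith
      then show ?thesis using 2 by (simp add: xn_def)
    qed
  qed
  have lastv: "last ?lam = ?lam ! (?n - 1)" using ne by (simp add: last_conv_nth)
  define i where "i = last_res l ?lam"
  have imod: "int i = xn mod int l"
  proof -
    have nn: "int (?n - 1) = int ?n - 1" using n0 by arith
    have "xn = (int (?lam ! (?n - 1)) - int ?n) + int l" unfolding xn_def xp_def nn by simp
    then have "xn mod int l = (int (?lam ! (?n - 1)) - int ?n) mod int l" by simp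
    then show ?thesis using l0 by (simp add: i_def last_res_def residue_def lastv)
  qed
  show il: "last_res l ?lam < l" using imod l0 unfolding i_def[symmetric]
    by (metis of_nat_less_iff pos_mod_bound of_nat_0_less_iff)
  then have il': "i < l" by (simp add: i_def)
  define R where "R = xn div int l"
  have xnR: "xn = R * int l + int i" using imod by (simp add: R_def)
  have Ra: "R \<le> a ! i" using xnX Xset_lin[OF l0 il', of R a] xnR by simp
  let ?v = "map real_of_int a"
  have lv: "length ?v = l" using la by simp
  have "LL l (map real_of_int (sgen l i a)) = LL l (sgen l i ?v)" using sgen_map[OF l il' la] by simp
  also have "\<dots> = LL l ?v - 1"
  proof (cases "i = 0")
    case False
    have e: "xn - 1 = R * int l + int (i - 1)" using xnR False by simp
    have "\<not> R \<le> a ! (i - 1)" using xn1 Xset_lin[OF l0 _, of "i - 1" R a] e il' by simp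
    then have t: "a ! (i - 1) - a ! i \<le> -1" using Ra by simp
    have "LL l (sgen l i ?v) = LL l ?v - FF (?v!(i-1) - ?v!i) + FF (?v!i - ?v!(i-1))"
      using LL_swap[OF l _ il' lv] False by simp
    also have "?v!(i-1) - ?v!i = of_int (a ! (i - 1) - a ! i)" using la il' by simp
    also have "?v!i - ?v!(i-1) = of_int (a ! i - a ! (i - 1))" using la il' by simp
    finally show ?thesis unfolding FF_int using t by simp
  next
    case True
    have e: "xn - 1 = (R - 1) * int l + int (l - 1)" using xnR True l0 by (simp add: algebra_simps of_nat_diff)
    have "\<not> R - 1 \<le> a ! (l - 1)" using xn1 Xset_lin[OF l0 _, of "l - 1" "R - 1" a] e l0 by simp
    then have t: "2 \<le> a ! 0 - a ! (l - 1)" using Ra True by simp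
    have "LL l (sgen l 0 ?v) = LL l ?v - FF (?v!0 - ?v!(l-1)) + FF (?v!(l-1) - ?v!0 + 2)"
      using LL_zero[OF l lv] by simp
    also have "?v!0 - ?v!(l-1) = of_int (a ! 0 - a ! (l - 1))" using la l by simp
    also have "?v!(l-1) - ?v!0 + 2 = of_int (a ! (l - 1) - a ! 0 + 2)" using la l by simp
    finally show ?thesis unfolding FF_int using t True by simp
  qed
  finally show "LL l (map real_of_int (sgen l (last_res l (pi_l l a)) a)) = LL l (map real_of_int a) - 1"
    by (simp add: i_def)
qed

lemma residue_xp:
  assumes "k < length lam"
  shows "residue l (Suc k) (lam ! k) = nat (xp (int l) lam k mod int l)"
proof -
  have "xp (int l) lam k = (int (lam ! k) - int (Suc k)) + int l" by (simp add: xp_def)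
  then have "xp (int l) lam k mod int l = (int (lam ! k) - int (Suc k)) mod int l" by simp
  then show ?thesis by (simp add: residue_def)
qed

lemma Rlen_gc:
  assumes l: "2 \<le> l" and a: "inLambda l a" and i: "i < l"
  shows "Rlen l (pi_l l a) i = gcS (Xset l a) (a ! i * int l + int i)"
proof -
  have l0: "0 < l" using l by simp
  let ?lam = "pi_l l a"
  let ?n = "length ?lam"
  let ?B = "Bset (int l) ?lam"
  have p: "is_partition ?lam" and X: "Xset l a = ?B" using XB[OF l a] by auto
  define T where "T = a ! i * int l + int i"
  define G where "G = gcS ?B T"
  define A where "A = {?lam ! (x - 1) | x. 1 \<le> x \<and> x \<le> ?n \<and> residue l x (?lam ! (x - 1)) = i}"
  have finA: "finite A"
    by (rule finite_subset[of _ "(\<lambda>x. ?lam ! (x - 1)) ` {1..?n}"]) (auto simp: A_def)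
  have ub: "v \<le> G" if "v \<in> insert 0 A" for v
  proof (cases "v = 0")
    case False
    then have "v \<in> A" using that by simp
    then obtain x where x: "1 \<le> x" "x \<le> ?n" "residue l x (?lam ! (x - 1)) = i" "v = ?lam ! (x - 1)"
      unfolding A_def by blast
    define k where "k = x - 1"
    have k: "k < ?n" "x = Suc k" using x by (auto simp: k_def)
    have r: "nat (xp (int l) ?lam k mod int l) = i" using residue_xp[OF k(1), of l] x k by simp
    have "xp (int l) ?lam k mod int l = int i" using r l0 by (metis nat_eq_iff pos_mod_sign of_nat_0_less_iff)
    then have xe: "xp (int l) ?lam k = (xp (int l) ?lam k div int l) * int l + int i" by (metis div_mult_mod_eq)
    have "xp (int l) ?lam k \<in> Xset l a" using k X by (auto simp: Bset_def)
    then have "xp (int l) ?lam k div int l \<le> a ! i" using Xset_lin[OF l0 i] xe by metis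
    then have "(xp (int l) ?lam k div int l) * int l \<le> a ! i * int l" by (simp add: mult_right_mono)
    then have "xp (int l) ?lam k \<le> T" using xe by (simp add: T_def)
    then have "gcS ?B (xp (int l) ?lam k) \<le> G" unfolding G_def by (rule gc_mono_B)
    moreover have "v = ?lam ! k" using x(4) k(2) by simp
    ultimately show ?thesis using gc_B[OF p k(1)] by simp
  qed simp
  have Gin: "G \<in> insert 0 A"
  proof (cases "G = 0")
    case False
    have "T \<in> ?B" using Xset_lin[OF l0 i, of "a ! i" a] X by (simp add: T_def)
    then consider "T \<le> int l - int ?n - 1" | k where "k < ?n" "T = xp (int l) ?lam k"
      unfolding Bset_def by auto
    then show ?thesis
    proof cases
      case 1 then show ?thesis using gc_low[OF 1] False by (simp add: G_def)
    next
      case 2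
      have "residue l (Suc k) (?lam ! k) = nat (T mod int l)" using residue_xp[OF 2(1), of l] 2 by simp
      also have "T mod int l = int i" using divmod_lin(2)[OF l0, of "int i" "a ! i"] i by (simp add: T_def)
      finally have r: "residue l (Suc k) (?lam ! k) = i" by simp
      have "G = ?lam ! k" using gc_B[OF p 2(1)] 2 by (simp add: G_def)
      then have "G \<in> A" unfolding A_def using 2 r by (intro CollectI exI[of _ "Suc k"]) auto
      then show ?thesis by simp
    qed
  qed simp
  have "Rlen l ?lam i = Max (insert 0 A)" by (simp add: Rlen_def A_def)
  also have "\<dots> = G" by (rule Max_eqI) (use finA ub Gin in auto)
  finally show ?thesis using X by (simp add: G_def T_def)
qed

lemma lin_inj:
  assumes l: "0 < l" and j: "j < l" "j' < l" and e: "R * int l + int j = R' * int l + int j'"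
  shows "R = R'" "j = j'"
proof -
  show "R = R'" using divmod_lin(1)[OF l, of "int j" R] divmod_lin(1)[OF l, of "int j'" R'] e j by simp
  show "j = j'" using divmod_lin(2)[OF l, of "int j" R] divmod_lin(2)[OF l, of "int j'" R'] e j by simp
qed

lemma gcT:
  assumes l0: "0 < l" and i: "i < l"
  shows "gcS (Xset l a) (a ! i * int l + int i)
    = (\<Sum>j<l. if j < i then nat (a!i - a!j) else nat (a!i - a!j - 1))"
proof -
  define T where "T = a ! i * int l + int i"
  define I where "I = (\<lambda>j. if j < i then {a!j + 1 .. a!i} else {a!j + 1 .. a!i - 1})"
  define f where "f = (\<lambda>(j::nat, R::int). R * int l + int j)"
  define A where "A = (SIGMA j:{..<l}. I j)"
  have eq: "{y. y \<notin> Xset l a \<and> y < T} = f ` A"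
  proof (intro set_eqI iffI)
    fix y assume y: "y \<in> {y. y \<notin> Xset l a \<and> y < T}"
    define R where "R = y div int l"
    define j where "j = nat (y mod int l)"
    have yy: "y = R * int l + int j" using l0 by (simp add: R_def j_def)
    have jl: "j < l" using l0 by (simp add: j_def nat_less_iff)
    have Rgt: "a ! j < R" using y Xset_lin[OF l0 jl, of R a] yy by simp
    have "R \<in> I j"
    proof (cases "j < i")
      case True
      have "R \<le> a ! i"
      proof (rule ccontr)
        assume "\<not> R \<le> a ! i"
        then have "(a ! i + 1) * int l \<le> R * int l" by (intro mult_right_mono) auto
        then show False using y yy i by (simp add: T_def algebra_simps)
      qed
      then show ?thesis using Rgt True by (simp add: I_def)
    next
      case False
      have "R \<le> a ! i - 1"
      proof (rule ccontr)
        assume "\<not> R \<le> a ! i - 1"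
        then have "a ! i * int l \<le> R * int l" by (intro mult_right_mono) auto
        then show False using y yy False by (simp add: T_def algebra_simps)
      qed
      then show ?thesis using Rgt False by (simp add: I_def)
    qed
    then show "y \<in> f ` A" using jl yy unfolding A_def f_def by force
  next
    fix y assume "y \<in> f ` A"
    then obtain j R where jR: "j < l" "R \<in> I j" "y = R * int l + int j"
      unfolding A_def f_def by auto
    have "a ! j < R" using jR(2) by (auto simp: I_def split: if_splits)
    then have nX: "y \<notin> Xset l a" using Xset_lin[OF l0 jR(1), of R a] jR(3) by simp
    have "y < T"
    proof (cases "j < i")
      case True
      then have "R \<le> a ! i" using jR(2) by (simp add: I_def)
      then have "R * int l \<le> a ! i * int l" by (simp add: mult_right_mono)
      then show ?thesis using jR(3) True by (simp add: T_def)
    next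
      case False
      then have "R \<le> a ! i - 1" using jR(2) by (simp add: I_def)
      then have "R * int l \<le> (a ! i - 1) * int l" by (simp add: mult_right_mono)
      then show ?thesis using jR(3) jR(1) by (simp add: T_def algebra_simps)
    qed
    then show "y \<in> {y. y \<notin> Xset l a \<and> y < T}" using nX by simp
  qed
  have inj: "inj_on f A"
  proof (rule inj_onI)
    fix x y assume x: "x \<in> A" and y: "y \<in> A" and e: "f x = f y"
    obtain j R where x': "x = (j,R)" "j < l" using x unfolding A_def by auto
    obtain j' R' where y': "y = (j',R')" "j' < l" using y unfolding A_def by auto
    have e': "R * int l + int j = R' * int l + int j'" using e x' y' by (simp add: f_def)
    show "x = y" using lin_inj[OF l0 x'(2) y'(2) e'] x' y' by simp
  qed
  have "gcS (Xset l a) T = card A" unfolding gcS_def eq by (rule card_image[OF inj])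
  also have "\<dots> = (\<Sum>j<l. card (I j))" unfolding A_def by (rule card_SigmaI) (auto simp: I_def)
  also have "\<dots> = (\<Sum>j<l. if j < i then nat (a!i - a!j) else nat (a!i - a!j - 1))"
    by (intro sum.cong) (auto simp: I_def)
  finally show ?thesis by (simp add: T_def)
qed

lemma double_to_pairs:
  fixes h :: "nat \<Rightarrow> nat \<Rightarrow> 'a::comm_monoid_add"
  shows "(\<Sum>i<l. \<Sum>j<l. h i j) = (\<Sum>(p,q)\<in>PP l. h p q + h q p) + (\<Sum>i<l. h i i)"
proof -
  define D where "D = (\<lambda>i. (i,i)) ` {..<l}"
  have U: "{..<l} \<times> {..<l} = (PP l \<union> prod.swap ` PP l) \<union> D"
    by (auto simp: PP_def D_def image_iff)
  have d1: "PP l \<inter> prod.swap ` PP l = {}" by (auto simp: PP_def)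
  have d2: "(PP l \<union> prod.swap ` PP l) \<inter> D = {}" by (auto simp: PP_def D_def)
  have fD: "finite D" by (simp add: D_def)
  have "(\<Sum>i<l. \<Sum>j<l. h i j) = (\<Sum>x\<in>{..<l} \<times> {..<l}. case x of (i,j) \<Rightarrow> h i j)"
    by (simp add: sum.cartesian_product)
  also have "\<dots> = (\<Sum>x\<in>PP l \<union> prod.swap ` PP l. case x of (i,j) \<Rightarrow> h i j) + (\<Sum>x\<in>D. case x of (i,j) \<Rightarrow> h i j)"
    unfolding U by (rule sum.union_disjoint) (use d2 fD in auto)
  also have "(\<Sum>x\<in>PP l \<union> prod.swap ` PP l. case x of (i,j) \<Rightarrow> h i j)
      = (\<Sum>x\<in>PP l. case x of (i,j) \<Rightarrow> h i j) + (\<Sum>x\<in>prod.swap ` PP l. case x of (i,j) \<Rightarrow> h i j)"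
    by (rule sum.union_disjoint) (use d1 in auto)
  also have "(\<Sum>x\<in>prod.swap ` PP l. case x of (i,j) \<Rightarrow> h i j) = (\<Sum>x\<in>PP l. case x of (i,j) \<Rightarrow> h j i)"
    by (subst sum.reindex) (auto simp: inj_on_def)
  also have "(\<Sum>x\<in>D. case x of (i,j) \<Rightarrow> h i j) = (\<Sum>i<l. h i i)"
    unfolding D_def by (subst sum.reindex) (auto simp: inj_on_def)
  finally show ?thesis by (simp add: sum.distrib[symmetric] split_def)
qed

lemma Rsum:
  assumes l: "2 \<le> l" and a: "inLambda l a"
  shows "int (\<Sum>i<l. Rlen l (pi_l l a) i) = LL l (map real_of_int a)"
proof -
  have l0: "0 < l" using l by simp
  have la: "length a = l" using a by (simp add: inLambda_def)
  define h where "h = (\<lambda>i j. if j < i then nat (a!i - a!j) else nat (a!i - a!j - 1))"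
  have "(\<Sum>i<l. Rlen l (pi_l l a) i) = (\<Sum>i<l. \<Sum>j<l. h i j)"
    by (intro sum.cong) (auto simp: Rlen_gc[OF l a] gcT[OF l0] h_def)
  also have "\<dots> = (\<Sum>(p,q)\<in>PP l. h p q + h q p) + (\<Sum>i<l. h i i)" by (rule double_to_pairs)
  also have "(\<Sum>i<l. h i i) = 0" by (simp add: h_def)
  finally have e: "int (\<Sum>i<l. Rlen l (pi_l l a) i) = (\<Sum>(p,q)\<in>PP l. int (h p q + h q p))"
    by (simp add: split_def)
  also have "\<dots> = (\<Sum>(p,q)\<in>PP l. FF (map real_of_int a ! p - map real_of_int a ! q))"
  proof (intro sum.cong refl)
    fix x assume "x \<in> PP l"
    then obtain p q where x: "x = (p,q)" "p < q" "q < l" by (auto simp: PP_def)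
    have "map real_of_int a ! p - map real_of_int a ! q = of_int (a!p - a!q)" using x la by simp
    then have "FF (map real_of_int a ! p - map real_of_int a ! q) = max (a!p - a!q - 1) (- (a!p - a!q))"
      by (simp only: FF_int)
    then show "(case x of (p,q) \<Rightarrow> int (h p q + h q p)) = (case x of (p,q) \<Rightarrow> FF (map real_of_int a ! p - map real_of_int a ! q))"
      using x by (simp add: h_def max_def)
  qed
  finally show ?thesis by (simp add: LL_def)
qed

lemma LL_nonneg: "0 \<le> LL l v"
  unfolding LL_def by (rule sum_nonneg) (auto simp: FF_nonneg split: prod.splits)

lemma LL_zero_vec: "LL l (replicate l (0::real)) = 0"
proof -
  have "FF (replicate l 0 ! p - replicate l 0 ! q) = 0" if "(p,q) \<in> PP l" for p q
    using that by (simp add: PP_def FF_def)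
  then show ?thesis unfolding LL_def by (intro sum.neutral) auto
qed

lemma pi_zero:
  assumes l: "2 \<le> l"
  shows "pi_l l (replicate l 0) = []"
proof -
  have l0: "0 < l" using l by simp
  have "Xset l (replicate l 0) = Bset (int l) []"
  proof (intro set_eqI)
    fix y
    have "nat (y mod int l) < l" using l0 by (simp add: nat_less_iff)
    then have "y \<in> Xset l (replicate l 0) \<longleftrightarrow> y div int l \<le> 0" using Xset_iff[OF l0] by simp
    also have "\<dots> \<longleftrightarrow> y < int l"
    proof
      assume d: "y div int l \<le> 0"
      have "y = y div int l * int l + y mod int l" by simp
      moreover have "y div int l * int l \<le> 0" using d by (simp add: mult_nonpos_nonneg)
      moreover have "y mod int l < int l" using l0 by simp
      ultimately show "y < int l" by linarith
    next
      assume "y < int l"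
      then have "y div int l \<le> (int l - 1) div int l" using l0 by (intro zdiv_mono1) auto
      also have "(int l - 1) div int l = 0" using l0 by (simp add: div_pos_pos_trivial)
      finally show "y div int l \<le> 0" .
    qed
    finally show "y \<in> Xset l (replicate l 0) \<longleftrightarrow> y \<in> Bset (int l) []" by (auto simp: Bset_def)
  qed
  then show ?thesis using GEN[OF l0, of "[]"] by (simp add: is_partition_def)
qed

lemma main_ind:
  assumes l: "2 \<le> l"
  shows "inLambda l a \<Longrightarrow> LL l (map real_of_int a) = int N \<Longrightarrow>
    \<exists>w. wrel l (pi_l l a) w \<and> is_word l w \<and> length w = N \<and> act l w (replicate l 0) = map real_of_int a"
proof (induction N arbitrary: a)
  case 0
  show ?case
  proof (cases "pi_l l a = []")
    case True
    have z: "inLambda l (replicate l 0)" by (simp add: inLambda_def sum_list_replicate)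
    have "a = replicate l 0" using pi_inj[OF l 0(1) z] True pi_zero[OF l] by simp
    then show ?thesis using True by (intro exI[of _ "[]"]) (auto intro: wrel.empty simp: is_word_def)
  next
    case False
    have "LL l (map real_of_int (sgen l (last_res l (pi_l l a)) a)) = -1"
      using dec(2)[OF l 0(1) False] 0(2) by simp
    then show ?thesis using LL_nonneg by (metis neg_0_le_iff_le not_one_le_zero)
  qed
next
  case (Suc N)
  have ne: "pi_l l a \<noteq> []"
  proof
    assume e: "pi_l l a = []"
    have z: "inLambda l (replicate l 0)" by (simp add: inLambda_def sum_list_replicate)
    have "a = replicate l 0" using pi_inj[OF l Suc.prems(1) z] e pi_zero[OF l] by simp
    then have "LL l (map real_of_int a) = 0" using LL_zero_vec by simp
    then show False using Suc.prems(2) by simp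
  qed
  define i where "i = last_res l (pi_l l a)"
  have il: "i < l" using dec(1)[OF l Suc.prems(1) ne] by (simp add: i_def)
  define a' where "a' = sgen l i a"
  have a': "inLambda l a'" using sgen_Lambda[OF l il Suc.prems(1)] by (simp add: a'_def)
  have LLa': "LL l (map real_of_int a') = int N"
    using dec(2)[OF l Suc.prems(1) ne] Suc.prems(2) by (simp add: a'_def i_def)
  obtain w' where w': "wrel l (pi_l l a') w'" "is_word l w'" "length w' = N"
    "act l w' (replicate l 0) = map real_of_int a'"
    using Suc.IH[OF a' LLa'] by blast
  have la: "length a = l" using Suc.prems(1) by (simp add: inLambda_def sum_list_replicate)
  have sc: "score l i (pi_l l a) = pi_l l a'"
    by (simp add: score_def pi_inv_pi[OF l Suc.prems(1)] a'_def)
  have "wrel l (pi_l l a) (i # w')"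
    by (rule wrel.step[OF ne i_def]) (use w'(1) sc in simp)
  moreover have "is_word l (i # w')" using w'(2) il by (simp add: is_word_def)
  moreover have "act l (i # w') (replicate l 0) = map real_of_int a"
  proof -
    have "act l (i # w') (replicate l 0) = sgen l i (map real_of_int a')" using w'(4) by simp
    also have "\<dots> = sgen l i (sgen l i (map real_of_int a))"
      using sgen_map[OF l il la] by (simp add: a'_def)
    also have "\<dots> = map real_of_int a" using sgen_sgen[OF l il, of "map real_of_int a"] la by simp
    finally show ?thesis .
  qed
  ultimately show ?case using w'(3) by (intro exI[of _ "i # w'"]) simp
qed

lemma coxlen_le: "is_word l w \<Longrightarrow> coxlen l w \<le> length w"
  unfolding coxlen_def by (rule Least_le) (auto simp: same_elem_def)

lemma coxlen_wit: "is_word l w \<Longrightarrow> \<exists>w'. is_word l w' \<and> length w' = coxlen l w \<and> same_elem l w w'"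
  unfolding coxlen_def by (rule LeastI_ex) (auto simp: same_elem_def)

lemma zero_V: "inV l (replicate l 0)"
  by (simp add: inV_def sum_list_replicate)

lemma LB_coxlen:
  assumes l: "2 \<le> l" and w: "is_word l w" and v: "inV l v"
  shows "LL l (act l w v) \<le> LL l v + int (coxlen l w)"
proof -
  obtain w'' where w'': "is_word l w''" "length w'' = coxlen l w" "same_elem l w w''"
    using coxlen_wit[OF w] by blast
  have "act l w v = act l w'' v" using w''(3) v by (simp add: same_elem_def)
  moreover have "length v = l" using v by (simp add: inV_def)
  ultimately show ?thesis using LL_act[OF l w''(1)] w''(2) by simp
qed

theorem mainTheorem4:
  fixes l :: nat and lam :: "nat list"
  assumes "l \<ge> 2" and "is_core l lam"
  shows "\<exists>w. wrel l lam w \<and> reduced l w \<and> is_min_elem l lam w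
           \<and> length w = (\<Sum>i<l. Rlen l lam i)"
proof -
  have l: "2 \<le> l" using assms(1) .
  have l1: "1 \<le> l" using l by simp
  obtain a where a: "inLambda l a" and pa: "pi_l l a = lam" using core_surj[OF l assms(2)] by blast
  have la: "length a = l" using a by (simp add: inLambda_def)
  define N where "N = nat (LL l (map real_of_int a))"
  have NLL: "LL l (map real_of_int a) = int N" using LL_nonneg by (simp add: N_def)
  obtain w where wr: "wrel l (pi_l l a) w" and ww: "is_word l w" and wl: "length w = N"
    and w0: "act l w (replicate l 0) = map real_of_int a"
    using main_ind[OF l a NLL] by blast
  have pinv: "pi_inv l lam = a" using pi_inv_pi[OF l a] pa by simp
  have lb: "int N \<le> int (coxlen l w')" if "is_word l w'" "act l w' (replicate l 0) = map real_of_int a" for w'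
    using LB_coxlen[OF l that(1) zero_V] that(2) LL_zero_vec NLL by simp
  have cw: "coxlen l w = N"
    using coxlen_le[OF ww] lb[OF ww w0] wl by simp
  have red: "reduced l w" using ww cw wl by (simp add: reduced_def)
  have "int (\<Sum>i<l. Rlen l lam i) = int N" using Rsum[OF l a] NLL pa by simp
  then have len: "length w = (\<Sum>i<l. Rlen l lam i)" using wl by (simp only: of_nat_eq_iff)
  have coset: "in_coset l lam w" using ww w0 pinv by (simp add: in_coset_def)
  let ?c = "cvec l"
  have cV: "inV l ?c" using cvec_V[OF l1] .
  have lc: "length ?c = l" by simp
  have pat: "\<exists>\<sigma>. bij_betw \<sigma> {..<l} {..<l} \<and>
       (\<forall>v. length v = l \<longrightarrow> (\<forall>k<l. act l w' v ! k = v ! (\<sigma> k) + real_of_int (a ! k))) \<and>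
       (LL l (act l w' ?c) \<le> int N \<longrightarrow> (\<forall>p q. p < q \<longrightarrow> q < l \<longrightarrow> (\<sigma> p < \<sigma> q \<longleftrightarrow> a!p \<le> a!q)))"
    if w': "is_word l w'" "act l w' (replicate l 0) = map real_of_int a" for w'
  proof -
    obtain \<sigma> where bs: "bij_betw \<sigma> {..<l} {..<l}"
      and rep: "\<forall>v::real list. length v = l \<longrightarrow> (\<forall>k<l. act l w' v ! k = v ! (\<sigma> k) + act l w' (replicate l 0) ! k)"
      using act_rep[OF w'(1) l] by blast
    have rep': "\<forall>v. length v = l \<longrightarrow> (\<forall>k<l. act l w' v ! k = v ! (\<sigma> k) + real_of_int (a ! k))"
      using rep w'(2) la by simp
    have xk: "act l w' ?c ! k = real_of_int (a!k) + ?c ! (\<sigma> k)" if "k < l" for k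
      using rep' lc that by simp
    have lx: "length (act l w' ?c) = l" by simp
    have o1: "LL l (map real_of_int a) \<le> LL l (act l w' ?c)" by (rule OPT(1)[OF l1 la lx bs xk])
    have "LL l (act l w' ?c) \<le> int N \<longrightarrow> (\<forall>p q. p < q \<longrightarrow> q < l \<longrightarrow> (\<sigma> p < \<sigma> q \<longleftrightarrow> a!p \<le> a!q))"
    proof
      assume "LL l (act l w' ?c) \<le> int N"
      then have "LL l (act l w' ?c) = LL l (map real_of_int a)" using o1 NLL by simp
      then show "\<forall>p q. p < q \<longrightarrow> q < l \<longrightarrow> (\<sigma> p < \<sigma> q \<longleftrightarrow> a!p \<le> a!q)"
        using OPT(2)[OF l1 la lx bs xk] by blast
    qed
    then show ?thesis using bs rep' by blast
  qed
  have minel: "is_min_elem l lam w"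
    unfolding is_min_elem_def
  proof (intro conjI allI impI)
    show "in_coset l lam w" by (rule coset)
    fix w' assume h: "in_coset l lam w' \<and> \<not> same_elem l w w'"
    have w'w: "is_word l w'" and w'0: "act l w' (replicate l 0) = map real_of_int a"
      using h pinv by (auto simp: in_coset_def)
    show "coxlen l w < coxlen l w'"
    proof (rule ccontr)
      assume "\<not> coxlen l w < coxlen l w'"
      then have cle: "coxlen l w' \<le> N" using cw by simp
      have "LL l (act l w' ?c) \<le> LL l ?c + int (coxlen l w')" by (rule LB_coxlen[OF l w'w cV])
      then have LLw': "LL l (act l w' ?c) \<le> int N" using LL_cvec cle by simp
      have "LL l (act l w ?c) \<le> LL l ?c + int (length w)" by (rule LL_act[OF l ww lc])
      then have LLw: "LL l (act l w ?c) \<le> int N" using LL_cvec wl by simp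
      obtain \<sigma> where s1: "bij_betw \<sigma> {..<l} {..<l}"
        "\<forall>v. length v = l \<longrightarrow> (\<forall>k<l. act l w v ! k = v ! (\<sigma> k) + real_of_int (a ! k))"
        "\<forall>p q. p < q \<longrightarrow> q < l \<longrightarrow> (\<sigma> p < \<sigma> q \<longleftrightarrow> a!p \<le> a!q)"
        using pat[OF ww w0] LLw by blast
      obtain \<sigma>' where s2: "bij_betw \<sigma>' {..<l} {..<l}"
        "\<forall>v. length v = l \<longrightarrow> (\<forall>k<l. act l w' v ! k = v ! (\<sigma>' k) + real_of_int (a ! k))"
        "\<forall>p q. p < q \<longrightarrow> q < l \<longrightarrow> (\<sigma>' p < \<sigma>' q \<longleftrightarrow> a!p \<le> a!q)"
        using pat[OF w'w w'0] LLw' by blast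
      have ss: "\<sigma> k = \<sigma>' k" if "k < l" for k
        using RANK[OF s1(1) s2(1) _ that] s1(3) s2(3) by blast
      have "same_elem l w w'"
        unfolding same_elem_def
      proof (intro allI impI)
        fix v :: "real list" assume "inV l v"
        then have lv: "length v = l" by (simp add: inV_def)
        show "act l w v = act l w' v"
        proof (rule nth_equalityI)
          show "length (act l w v) = length (act l w' v)" by simp
          fix k assume "k < length (act l w v)"
          then have k: "k < l" using lv by simp
          show "act l w v ! k = act l w' v ! k" using s1(2) s2(2) lv k ss[OF k] by simp
        qed
      qed
      then show False using h by simp
    qed
  qed
  show ?thesis using wr pa red minel len by (intro exI[of _ w]) simp
qed

end
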